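(* Let $\ell:\mathcal{Z}\times\mathbb{R}^d\to[0,\infty)$ be a non-negative loss, differentiable in the parameter $\Theta\in\mathbb{R}^d$. Let $(p^t)_{t\ge0}$ and $p^*$ be probability densities on $\mathcal{Z}$, and set $c^t\triangleq\int|p^t(z)-p^*(z)|\,dz$. Define $\mathcal{L}(\Theta)\triangleq\mathbb{E}_{Z\sim p^*}[\ell(Z;\Theta)]$. Consider the iteration $$\Theta^{t+1}=\Theta^t-\eta_t\nabla_{\Theta}\ell(Z^t;\Theta^t),$$ where $\eta_t>0$, $\Theta^0$ is an initial (possibly random) parameter, and, conditionally on the past $(\Theta^0,Z^0,\dots,Z^{t-1})$, $Z^t$ has density $p^t$. Assume: (A1) $\mathcal{L}$ is differentiable and $\nabla\mathcal{L}$ is $L$-Lipschitz; (A2) $\sum_t\eta_t=\infty$ and $\sum_t\eta_t^2<\infty$; (A3) there is $G>0$ such that for all $t$ and all $\Theta$, $\mathbb{E}_{Z\sim p^t}\big[\Vert\nabla_{\Theta}\ell(Z;\Theta)\Vert^2\big]\le G$; (A4) $\sum_t c^t<\infty$. Then for every $T$, $$\sum_{t=0}^T\eta_t\,\mathbb{E}\big[\Vert\nabla\mathcal{L}(\Theta^t)\Vert^2\big]\le\mathbb{E}[\mathcal{L}(\Theta^0)]+G\sum_{t=0}^T\eta_t\Big(\sqrt{2c^t}+\frac{L\eta_t}{2}\Big),$$ and each term of this inequality converges as $T\to\infty$.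
   Context: This is the setting of a single module $j>1$ in a layer-wise ("greedy") training scheme trained in parallel with the preceding modules: $p^t$ is the time-varying density of the input sample fed to the module at step $t$, $p^*$ is the density of the previous module's output at convergence, and $\Theta$ collects the module's parameters and those of its auxiliary network. Expectations without subscript are over all random variables. *)

theory Defs
  imports "HOL-Probability.Probability"
begin

end

theory Submission
  imports Defs
begin



lemma cs_lemma:
  fixes x A B :: real
  assumes A: "A \<ge> 0" and B: "B \<ge> 0" and h: "\<And>a. a > 0 \<Longrightarrow> \<bar>x\<bar> \<le> a * A + B / a"
  shows "x\<^sup>2 \<le> 4 * A * B"
proof (cases "A > 0 \<and> B > 0")
  case True
  define a where "a = sqrt (B / A)"
  have a: "a > 0" using True by (simp add: a_def)
  have "a * A = sqrt (A * B)" using True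
    by (simp add: a_def real_sqrt_divide real_sqrt_mult field_simps)
  moreover have "B / a = sqrt (A * B)" using True
    by (simp add: a_def real_sqrt_divide real_sqrt_mult field_simps)
  ultimately have "\<bar>x\<bar> \<le> 2 * sqrt (A * B)" using h[OF a] by simp
  hence "x\<^sup>2 \<le> (2 * sqrt (A * B))\<^sup>2"
    by (metis abs_ge_zero power2_abs power_mono)
  also have "\<dots> = 4 * A * B" using A B by (simp add: power_mult_distrib)
  finally show ?thesis .
next
  case False
  have "x = 0"
  proof (rule ccontr)
    assume nz: "x \<noteq> 0"
    show False
    proof (cases "A = 0")
      case True
      define a where "a = 2 * B / \<bar>x\<bar> + 1"
      have a: "a > 0" using nz B unfolding a_def by (intro add_nonneg_pos) auto
      have "\<bar>x\<bar> \<le> B / a" using h[OF a] True by simp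
      moreover have "B / a < \<bar>x\<bar>"
      proof -
        have "\<bar>x\<bar> * a = 2 * B + \<bar>x\<bar>" using nz by (simp add: a_def field_simps)
        hence "B < \<bar>x\<bar> * a" using nz B by simp
        thus ?thesis using a by (simp add: divide_less_eq)
      qed
      ultimately show False by simp
    next
      case AF: False
      hence B0: "B = 0" using False A B by auto
      define a where "a = \<bar>x\<bar> / (2 * A)"
      have a: "a > 0" using nz A AF by (simp add: a_def)
      have "\<bar>x\<bar> \<le> a * A" using h[OF a] B0 by simp
      also have "a * A = \<bar>x\<bar> / 2" using AF by (simp add: a_def)
      finally show False using nz by simp
    qed
  qed
  thus ?thesis using A B by simp
qed

lemma line_deriv:
  fixes f :: "'p::real_inner \<Rightarrow> real"
  assumes "(f has_derivative (\<lambda>h. g \<bullet> h)) (at (x + s *\<^sub>R d))"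
  shows "((\<lambda>s. f (x + s *\<^sub>R d)) has_real_derivative (g \<bullet> d)) (at s)"
proof -
  have l: "((\<lambda>s. x + s *\<^sub>R d) has_derivative (\<lambda>t. t *\<^sub>R d)) (at s)"
    by (auto intro!: derivative_eq_intros)
  have "((\<lambda>s. f (x + s *\<^sub>R d)) has_derivative (\<lambda>t. g \<bullet> (t *\<^sub>R d))) (at s)"
    using has_derivative_compose[OF l assms] by (simp add: o_def)
  moreover have "(\<lambda>t. g \<bullet> (t *\<^sub>R d)) = (*) (g \<bullet> d)" by (auto simp: mult.commute)
  ultimately show ?thesis by (simp add: has_field_derivative_def)
qed

lemma descent_lemma:
  fixes L :: "'p::real_inner \<Rightarrow> real"
  assumes diff: "\<And>\<theta>. (L has_derivative (\<lambda>h. gradL \<theta> \<bullet> h)) (at \<theta>)"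
    and lip: "Lc-lipschitz_on UNIV gradL"
  shows "L y \<le> L x + gradL x \<bullet> (y - x) + Lc / 2 * (norm (y - x))\<^sup>2"
proof -
  define d where "d = y - x"
  define \<psi> where "\<psi> s = L (x + s *\<^sub>R d) - s * (gradL x \<bullet> d) - Lc / 2 * s\<^sup>2 * (norm d)\<^sup>2" for s
  have Lc: "Lc \<ge> 0" using lip by (simp add: lipschitz_on_def)
  have "\<psi> 1 \<le> \<psi> 0"
  proof (rule DERIV_nonpos_imp_nonincreasing[of 0 1])
    fix s :: real assume s: "0 \<le> s" "s \<le> 1"
    have D: "(\<psi> has_real_derivative
        (gradL (x + s *\<^sub>R d) \<bullet> d - gradL x \<bullet> d - Lc / 2 * (2 * s) * (norm d)\<^sup>2)) (at s)"
      unfolding \<psi>_def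
      by (intro derivative_intros line_deriv diff) (auto intro!: derivative_eq_intros)
    have "(gradL (x + s *\<^sub>R d) - gradL x) \<bullet> d \<le> norm (gradL (x + s *\<^sub>R d) - gradL x) * norm d"
      by (rule norm_cauchy_schwarz)
    also have "norm (gradL (x + s *\<^sub>R d) - gradL x) \<le> Lc * norm (s *\<^sub>R d)"
    proof -
      have "dist (gradL (x + s *\<^sub>R d)) (gradL x) \<le> Lc * dist (x + s *\<^sub>R d) x"
        using lip by (simp add: lipschitz_on_def)
      thus ?thesis by (simp add: dist_norm)
    qed
    hence "norm (gradL (x + s *\<^sub>R d) - gradL x) * norm d \<le> Lc * norm (s *\<^sub>R d) * norm d"
      by (simp add: mult_right_mono)
    also have "\<dots> = Lc * s * (norm d)\<^sup>2" using s by (simp add: power2_eq_square)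
    finally have "gradL (x + s *\<^sub>R d) \<bullet> d - gradL x \<bullet> d - Lc / 2 * (2 * s) * (norm d)\<^sup>2 \<le> 0"
      by (simp add: inner_diff_left)
    with D show "\<exists>y. (\<psi> has_real_derivative y) (at s) \<and> y \<le> 0" by blast
  qed simp
  thus ?thesis unfolding \<psi>_def d_def by simp
qed




lemma abs_le_amgm:
  fixes y a :: real assumes "a > 0" shows "\<bar>y\<bar> \<le> a / 2 + y\<^sup>2 / (2 * a)"
proof -
  have "0 \<le> (\<bar>y\<bar> - a)\<^sup>2" by simp
  hence "2 * a * \<bar>y\<bar> \<le> a\<^sup>2 + y\<^sup>2" by (simp add: power2_eq_square algebra_simps)
  thus ?thesis using assms by (simp add: field_simps power2_eq_square)
qed

lemma ftc_sq_bound: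
  fixes F F' :: "real \<Rightarrow> real"
  assumes h: "h > 0" and D: "\<And>s. (F has_real_derivative F' s) (at s)"
    and M[measurable]: "F' \<in> borel_measurable borel"
  shows "ennreal ((F h - F 0)\<^sup>2) \<le> ennreal h * (\<integral>\<^sup>+s. indicator {0..h} s * ennreal ((F' s)\<^sup>2) \<partial>lborel)"
proof (cases "(\<integral>\<^sup>+s. indicator {0..h} s * ennreal ((F' s)\<^sup>2) \<partial>lborel) = \<infinity>")
  case True
  thus ?thesis using h by (simp add: ennreal_mult_top)
next
  case False
  define g where "g s = indicator {0..h} s * (F' s)\<^sup>2" for s
  define f1 where "f1 s = indicator {0..h} s * F' s" for s
  have eqN: "(\<integral>\<^sup>+s. indicator {0..h} s * ennreal ((F' s)\<^sup>2) \<partial>lborel) = (\<integral>\<^sup>+s. ennreal (norm (g s)) \<partial>lborel)"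
    by (intro nn_integral_cong) (auto simp: g_def indicator_def)
  have gm[measurable]: "g \<in> borel_measurable borel" unfolding g_def by measurable
  have gint: "integrable lborel g"
    by (rule integrableI_bounded) (use False eqN in \<open>auto simp: g_def top.not_eq_extremum\<close>)
  have gnn: "g s \<ge> 0" for s by (simp add: g_def)
  have eqS: "(\<integral>\<^sup>+s. indicator {0..h} s * ennreal ((F' s)\<^sup>2) \<partial>lborel) = ennreal (integral\<^sup>L lborel g)"
    using eqN gnn by (simp add: nn_integral_eq_integral[OF gint])
  define S where "S = integral\<^sup>L lborel g"
  have S0: "S \<ge> 0" unfolding S_def using gnn by (simp add: Bochner_Integration.integral_nonneg)
  have iint: "integrable lborel (indicator {0..h} :: real \<Rightarrow> real)"
    by (rule integrable_real_indicator) (use h in auto)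
  have iI: "integral\<^sup>L lborel (indicator {0..h} :: real \<Rightarrow> real) = h"
    using h by (simp add: Bochner_Integration.integral_indicator)
  have f1int: "integrable lborel f1"
  proof (rule Bochner_Integration.integrable_bound[where f = "\<lambda>s. indicator {0..h} s / 2 + g s / 2"])
    show "integrable lborel (\<lambda>s. indicator {0..h} s / 2 + g s / 2)" using iint gint by auto
    show "f1 \<in> borel_measurable lborel" unfolding f1_def by measurable
    show "AE x in lborel. norm (f1 x) \<le> norm (indicator {0..h} x / 2 + g x / 2)"
    proof (intro AE_I2)
      fix x
      have "\<bar>F' x\<bar> \<le> 1 / 2 + (F' x)\<^sup>2 / 2" using abs_le_amgm[of 1 "F' x"] by simp
      thus "norm (f1 x) \<le> norm (indicator {0..h} x / 2 + g x / 2)"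
        by (auto simp: f1_def g_def indicator_def)
    qed
  qed
  have HK: "(F' has_integral (F h - F 0)) {0..h}"
    using h D by (intro fundamental_theorem_of_calculus)
      (auto simp: has_real_derivative_iff_has_vector_derivative intro: has_vector_derivative_at_within)
  have "(f1 has_integral integral\<^sup>L lborel f1) UNIV" by (rule has_integral_integral_lborel[OF f1int])
  moreover have "f1 = (\<lambda>x. if x \<in> {0..h} then F' x else 0)" by (auto simp: f1_def indicator_def)
  ultimately have "((\<lambda>x. if x \<in> {0..h} then F' x else 0) has_integral integral\<^sup>L lborel f1) UNIV"
    by metis
  hence "(F' has_integral integral\<^sup>L lborel f1) {0..h}"
    by (simp only: has_integral_restrict_UNIV)
  hence eqF: "F h - F 0 = integral\<^sup>L lborel f1" using HK by (rule has_integral_unique[rotated])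
  have bound: "\<bar>F h - F 0\<bar> \<le> a * (h / 2) + (S / 2) / a" if a: "a > 0" for a
  proof -
    have "\<bar>F h - F 0\<bar> \<le> integral\<^sup>L lborel (\<lambda>s. \<bar>f1 s\<bar>)" unfolding eqF by (rule integral_abs_bound)
    also have "\<dots> \<le> integral\<^sup>L lborel (\<lambda>s. (a / 2) * indicator {0..h} s + (1 / (2 * a)) * g s)"
    proof (rule integral_mono)
      show "integrable lborel (\<lambda>s. \<bar>f1 s\<bar>)" using f1int by auto
      show "integrable lborel (\<lambda>s. (a / 2) * indicator {0..h} s + (1 / (2 * a)) * g s)"
        using iint gint by auto
      fix s
      show "\<bar>f1 s\<bar> \<le> (a / 2) * indicator {0..h} s + (1 / (2 * a)) * g s"
        using abs_le_amgm[OF a, of "F' s"] by (auto simp: f1_def g_def indicator_def)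
    qed
    also have "\<dots> = (a / 2) * h + (1 / (2 * a)) * S"
      using iint gint iI by (simp add: S_def)
    finally show ?thesis by simp
  qed
  have "(F h - F 0)\<^sup>2 \<le> 4 * (h / 2) * (S / 2)"
    by (rule cs_lemma) (use h S0 bound in auto)
  hence "(F h - F 0)\<^sup>2 \<le> h * S" by simp
  hence "ennreal ((F h - F 0)\<^sup>2) \<le> ennreal (h * S)" by (rule ennreal_leI)
  also have "\<dots> = ennreal h * ennreal S" using h S0 by (simp add: ennreal_mult)
  finally show ?thesis using eqS by (simp add: S_def)
qed




lemma sq_integrable:
  fixes f :: "'a \<Rightarrow> real"
  assumes "finite_measure M" and [measurable]: "f \<in> borel_measurable M"
    and fin: "(\<integral>\<^sup>+x. ennreal ((f x)\<^sup>2) \<partial>M) \<le> ennreal B"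
  shows "integrable M f" "integrable M (\<lambda>x. (f x)\<^sup>2)" "(\<integral>x. (f x)\<^sup>2 \<partial>M) \<le> max 0 B"
proof -
  interpret finite_measure M by fact
  show i2: "integrable M (\<lambda>x. (f x)\<^sup>2)"
    by (rule integrableI_bounded) (use fin in \<open>auto simp: top.not_eq_extremum intro: le_less_trans\<close>)
  show "integrable M f"
  proof (rule Bochner_Integration.integrable_bound[where f="\<lambda>x. 1/2 + (f x)\<^sup>2 / 2"])
    show "integrable M (\<lambda>x. 1/2 + (f x)\<^sup>2 / 2)" using i2 by auto
    show "AE x in M. norm (f x) \<le> norm (1/2 + (f x)\<^sup>2 / 2)"
      using abs_le_amgm[of 1] by (intro AE_I2) auto
  qed simp
  have "ennreal (\<integral>x. (f x)\<^sup>2 \<partial>M) = (\<integral>\<^sup>+x. ennreal ((f x)\<^sup>2) \<partial>M)"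
    by (rule nn_integral_eq_integral[OF i2, symmetric]) auto
  also have "\<dots> \<le> ennreal B" by (rule fin)
  finally show "(\<integral>x. (f x)\<^sup>2 \<partial>M) \<le> max 0 B"
    by (metis ennreal_le_iff2 max.cobounded2 max.commute nle_le order_trans)
qed

locale sgd =
  fixes Mz :: "'z measure"                 \<comment> \<open>base measure dz on the sample space Z\<close>
    and P :: "'w measure"
    and loss :: "'z \<Rightarrow> 'p::euclidean_space \<Rightarrow> real"
    and gl :: "'z \<Rightarrow> 'p \<Rightarrow> 'p"
    and p :: "nat \<Rightarrow> 'z \<Rightarrow> real" and pstar :: "'z \<Rightarrow> real"
    and c :: "nat \<Rightarrow> real"
    and L :: "'p \<Rightarrow> real" and gradL :: "'p \<Rightarrow> 'p" and Lc :: real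
    and \<eta> :: "nat \<Rightarrow> real" and G :: real
    and Z :: "nat \<Rightarrow> 'w \<Rightarrow> 'z" and \<Theta> :: "nat \<Rightarrow> 'w \<Rightarrow> 'p"
  assumes prob: "prob_space P"
    and loss_nonneg: "\<And>z \<theta>. z \<in> space Mz \<Longrightarrow> loss z \<theta> \<ge> 0"
    and loss_meas: "(\<lambda>(z, \<theta>). loss z \<theta>) \<in> borel_measurable (Mz \<Otimes>\<^sub>M borel)"
    and gl_meas: "(\<lambda>(z, \<theta>). gl z \<theta>) \<in> borel_measurable (Mz \<Otimes>\<^sub>M borel)"
    and loss_diff: "\<And>z \<theta>. z \<in> space Mz \<Longrightarrow>
                      (loss z has_derivative (\<lambda>h. gl z \<theta> \<bullet> h)) (at \<theta>)"
    and p_meas: "\<And>t. p t \<in> borel_measurable Mz"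
    and p_nonneg: "\<And>t z. z \<in> space Mz \<Longrightarrow> p t z \<ge> 0"
    and p_int: "\<And>t. integrable Mz (p t)"
    and p_one: "\<And>t. (\<integral>z. p t z \<partial>Mz) = 1"
    and pstar_meas: "pstar \<in> borel_measurable Mz"
    and pstar_nonneg: "\<And>z. z \<in> space Mz \<Longrightarrow> pstar z \<ge> 0"
    and pstar_int: "integrable Mz pstar"
    and pstar_one: "(\<integral>z. pstar z \<partial>Mz) = 1"
    and c_def: "\<And>t. c t = (\<integral>z. \<bar>p t z - pstar z\<bar> \<partial>Mz)"
    and L_integrable: "\<And>\<theta>. integrable Mz (\<lambda>z. pstar z * loss z \<theta>)"
    and L_def: "\<And>\<theta>. L \<theta> = (\<integral>z. pstar z * loss z \<theta> \<partial>Mz)"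
    and Z_meas: "\<And>t. Z t \<in> measurable P Mz"
    and Theta0_meas: "\<Theta> 0 \<in> borel_measurable P"
    and Z_cond: "\<And>t C A. C \<in> sets (borel \<Otimes>\<^sub>M (\<Pi>\<^sub>M i\<in>{..<t}. Mz)) \<Longrightarrow> A \<in> sets Mz \<Longrightarrow>
                   measure P {\<omega> \<in> space P. (\<Theta> 0 \<omega>, \<lambda>i\<in>{..<t}. Z i \<omega>) \<in> C \<and> Z t \<omega> \<in> A}
                 = measure P {\<omega> \<in> space P. (\<Theta> 0 \<omega>, \<lambda>i\<in>{..<t}. Z i \<omega>) \<in> C}
                   * measure (density Mz (p t)) A"
    and Theta_step: "\<And>t \<omega>. \<omega> \<in> space P \<Longrightarrow>
                      \<Theta> (Suc t) \<omega> = \<Theta> t \<omega> - \<eta> t *\<^sub>R gl (Z t \<omega>) (\<Theta> t \<omega>)"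
    and eta_pos: "\<And>t. \<eta> t > 0"
    and A1_diff: "\<And>\<theta>. (L has_derivative (\<lambda>h. gradL \<theta> \<bullet> h)) (at \<theta>)"
    and A1_lip: "Lc-lipschitz_on UNIV gradL"
    and A2_div: "\<not> summable \<eta>"
    and A2_sq: "summable (\<lambda>t. (\<eta> t)\<^sup>2)"
    and A3_pos: "G > 0"
    and A3: "\<And>t \<theta>. (\<integral>\<^sup>+ z. ennreal (p t z * (norm (gl z \<theta>))\<^sup>2) \<partial>Mz) \<le> ennreal G"
    and A4: "summable c"
    and init_int: "integrable P (\<lambda>\<omega>. L (\<Theta> 0 \<omega>))"

begin

abbreviation "mus \<equiv> density Mz pstar"
abbreviation "mu t \<equiv> density Mz (p t)"

lemma gl_comp[measurable]:
  assumes "f \<in> measurable N Mz" "g \<in> borel_measurable N"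
  shows "(\<lambda>x. gl (f x) (g x)) \<in> borel_measurable N"
  using measurable_compose[OF measurable_Pair[OF assms] gl_meas] by simp

lemma loss_comp[measurable]:
  assumes "f \<in> measurable N Mz" "g \<in> borel_measurable N"
  shows "(\<lambda>x. loss (f x) (g x)) \<in> borel_measurable N"
  using measurable_compose[OF measurable_Pair[OF assms] loss_meas] by simp

lemma p_meas'[measurable]: "p t \<in> borel_measurable Mz" by (rule p_meas)
lemma pstar_meas'[measurable]: "pstar \<in> borel_measurable Mz" by (rule pstar_meas)

lemma prob_density:
  assumes [measurable]: "q \<in> borel_measurable Mz" and nn: "\<And>z. z \<in> space Mz \<Longrightarrow> q z \<ge> 0"
    and i: "integrable Mz q" and one: "(\<integral>z. q z \<partial>Mz) = 1"
  shows "prob_space (density Mz q)"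
proof (rule prob_spaceI)
  have "emeasure (density Mz q) (space (density Mz q)) = (\<integral>\<^sup>+z. ennreal (q z) * indicator (space Mz) z \<partial>Mz)"
    by (simp add: emeasure_density)
  also have "\<dots> = (\<integral>\<^sup>+z. ennreal (q z) \<partial>Mz)"
    by (intro nn_integral_cong) simp
  also have "\<dots> = ennreal 1" using nn i one by (subst nn_integral_eq_integral) auto
  finally show "emeasure (density Mz q) (space (density Mz q)) = 1" by simp
qed

lemma prob_mu: "prob_space (mu t)"
  using p_nonneg p_int p_one by (intro prob_density) auto

lemma prob_mus: "prob_space mus"
  using pstar_nonneg pstar_int pstar_one by (intro prob_density) auto

lemma A3': "(\<integral>\<^sup>+z. ennreal ((norm (gl z \<theta>))\<^sup>2) \<partial>mu t) \<le> ennreal G"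
proof -
  have "(\<integral>\<^sup>+z. ennreal ((norm (gl z \<theta>))\<^sup>2) \<partial>mu t) = (\<integral>\<^sup>+z. ennreal (p t z) * ennreal ((norm (gl z \<theta>))\<^sup>2) \<partial>Mz)"
    by (simp add: nn_integral_density)
  also have "\<dots> = (\<integral>\<^sup>+z. ennreal (p t z * (norm (gl z \<theta>))\<^sup>2) \<partial>Mz)"
    using p_nonneg by (intro nn_integral_cong) (simp add: ennreal_mult)
  finally show ?thesis using A3 by simp
qed

lemma c_nonneg: "c t \<ge> 0" by (simp add: c_def)

lemma diff_int: "integrable Mz (\<lambda>z. \<bar>p t z - pstar z\<bar>)"
  using p_int pstar_int by auto

lemma nn_c: "(\<integral>\<^sup>+z. ennreal (\<bar>p t z - pstar z\<bar> * K) \<partial>Mz) = ennreal (K * c t)" if "K \<ge> 0" for K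
proof -
  have "(\<integral>\<^sup>+z. ennreal (\<bar>p t z - pstar z\<bar> * K) \<partial>Mz) = ennreal (\<integral>z. \<bar>p t z - pstar z\<bar> * K \<partial>Mz)"
    using diff_int that by (intro nn_integral_eq_integral) auto
  thus ?thesis by (simp add: c_def mult.commute)
qed

lemma sup_eventually:
  fixes f :: "nat \<Rightarrow> ennreal"
  assumes "incseq f" "\<And>n. n \<ge> N \<Longrightarrow> f n = x"
  shows "(SUP n. f n) = x"
proof -
  have "f \<longlonglongrightarrow> (SUP n. f n)" using LIMSEQ_SUP[OF assms(1)] by simp
  moreover have "f \<longlonglongrightarrow> x" by (rule tendsto_eventually) (use assms(2) in \<open>auto simp: eventually_sequentially\<close>)
  ultimately show ?thesis by (rule LIMSEQ_unique)
qed

lemma A3star: "(\<integral>\<^sup>+z. ennreal ((norm (gl z \<theta>))\<^sup>2) \<partial>mus) \<le> ennreal G"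
proof -
  define q where "q z = (norm (gl z \<theta>))\<^sup>2" for z
  have qm[measurable]: "q \<in> borel_measurable Mz" unfolding q_def by measurable
  have trunc: "(\<integral>\<^sup>+z. ennreal (pstar z * min (q z) (real K)) \<partial>Mz) \<le> ennreal G" for K :: nat
  proof -
    have b: "(\<integral>\<^sup>+z. ennreal (pstar z * min (q z) (real K)) \<partial>Mz) \<le> ennreal (G + real K * c t)" for t
    proof -
      have "(\<integral>\<^sup>+z. ennreal (pstar z * min (q z) (real K)) \<partial>Mz)
          \<le> (\<integral>\<^sup>+z. ennreal (p t z * q z) + ennreal (\<bar>p t z - pstar z\<bar> * real K) \<partial>Mz)"
      proof (intro nn_integral_mono)
        fix z assume z: "z \<in> space Mz"
        have q0: "q z \<ge> 0" by (simp add: q_def)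
        have "pstar z * min (q z) (real K) \<le> p t z * q z + \<bar>p t z - pstar z\<bar> * real K"
        proof (cases "pstar z \<le> p t z")
          case True
          have "pstar z * min (q z) (real K) \<le> p t z * q z"
            using True pstar_nonneg[OF z] q0 by (intro mult_mono) auto
          thus ?thesis by (simp add: add_increasing2)
        next
          case False
          have "pstar z * min (q z) (real K) = p t z * min (q z) (real K) + (pstar z - p t z) * min (q z) (real K)"
            by (simp add: algebra_simps)
          also have "\<dots> \<le> p t z * q z + \<bar>p t z - pstar z\<bar> * real K"
            using False p_nonneg[OF z] q0 by (intro add_mono mult_mono) auto
          finally show ?thesis .
        qed
        thus "ennreal (pstar z * min (q z) (real K)) \<le> ennreal (p t z * q z) + ennreal (\<bar>p t z - pstar z\<bar> * real K)"
          using p_nonneg[OF z] q0 by (simp add: ennreal_plus[symmetric] del: ennreal_plus)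
      qed
      also have "\<dots> = (\<integral>\<^sup>+z. ennreal (p t z * q z) \<partial>Mz) + (\<integral>\<^sup>+z. ennreal (\<bar>p t z - pstar z\<bar> * real K) \<partial>Mz)"
        by (rule nn_integral_add) auto
      also have "\<dots> \<le> ennreal G + ennreal (real K * c t)"
        using A3[of t \<theta>] nn_c[of "real K" t] by (simp add: q_def)
      also have "\<dots> = ennreal (G + real K * c t)" using A3_pos c_nonneg[of t] by (simp add: ennreal_plus)
      finally show ?thesis .
    qed
    have "(\<lambda>t. ennreal (G + real K * c t)) \<longlonglongrightarrow> ennreal (G + real K * 0)"
      by (intro tendsto_ennrealI tendsto_intros summable_LIMSEQ_zero A4)
    thus ?thesis using b by (intro LIMSEQ_le_const[where X="\<lambda>t. ennreal (G + real K * c t)"]) auto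
  qed
  have "(\<integral>\<^sup>+z. ennreal (q z) \<partial>mus) = (\<integral>\<^sup>+z. ennreal (pstar z * q z) \<partial>Mz)"
    using pstar_nonneg by (simp add: nn_integral_density) (intro nn_integral_cong, simp add: ennreal_mult q_def)
  also have "\<dots> = (\<integral>\<^sup>+z. (SUP K. ennreal (pstar z * min (q z) (real K))) \<partial>Mz)"
  proof (intro nn_integral_cong)
    fix z assume z: "z \<in> space Mz"
    show "ennreal (pstar z * q z) = (SUP K. ennreal (pstar z * min (q z) (real K)))"
    proof (rule sym, rule sup_eventually[where N="nat \<lceil>q z\<rceil>"])
      show "incseq (\<lambda>K. ennreal (pstar z * min (q z) (real K)))"
        using pstar_nonneg[OF z] by (auto simp: incseq_def intro!: ennreal_leI mult_left_mono)
      fix n assume "nat \<lceil>q z\<rceil> \<le> n"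
      hence "q z \<le> real n" by linarith
      thus "ennreal (pstar z * min (q z) (real n)) = ennreal (pstar z * q z)" by simp
    qed
  qed
  also have "\<dots> = (SUP K. (\<integral>\<^sup>+z. ennreal (pstar z * min (q z) (real K)) \<partial>Mz))"
  proof (rule nn_integral_monotone_convergence_SUP)
    show inc: "incseq (\<lambda>K z. ennreal (pstar z * min (q z) (real K)))"
    proof (unfold incseq_def le_fun_def, intro allI impI)
      fix m n :: nat and x assume mn: "m \<le> n"
      have q0: "q x \<ge> 0" by (simp add: q_def)
      show "ennreal (pstar x * min (q x) (real m)) \<le> ennreal (pstar x * min (q x) (real n))"
      proof (cases "pstar x \<ge> 0")
        case True thus ?thesis using mn by (intro ennreal_leI mult_left_mono) auto
      next
        case False
        hence "pstar x * min (q x) (real m) \<le> 0" using q0 by (intro mult_nonpos_nonneg) auto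
        hence "ennreal (pstar x * min (q x) (real m)) = 0" using ennreal_eq_0_iff by blast
        thus ?thesis by simp
      qed
    qed
  qed measurable
  also have "\<dots> \<le> ennreal G" using trunc by (rule SUP_least)
  finally show ?thesis by (simp add: q_def)
qed

end


context sgd begin

lemma finite_mus: "finite_measure mus"
  using prob_mus by (simp add: prob_space_def)
lemma finite_mu: "finite_measure (mu t)"
  using prob_mu by (simp add: prob_space_def)

lemma gl_u_sq: "(\<integral>\<^sup>+z. ennreal ((gl z \<theta> \<bullet> u)\<^sup>2) \<partial>mus) \<le> ennreal (G * (norm u)\<^sup>2)"
proof -
  have "(\<integral>\<^sup>+z. ennreal ((gl z \<theta> \<bullet> u)\<^sup>2) \<partial>mus) \<le> (\<integral>\<^sup>+z. ennreal ((norm (gl z \<theta>))\<^sup>2) * ennreal ((norm u)\<^sup>2) \<partial>mus)"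
  proof (intro nn_integral_mono)
    fix z
    have "\<bar>gl z \<theta> \<bullet> u\<bar> \<le> norm (gl z \<theta>) * norm u" by (rule Cauchy_Schwarz_ineq2)
    hence "(gl z \<theta> \<bullet> u)\<^sup>2 \<le> (norm (gl z \<theta>) * norm u)\<^sup>2"
      by (metis abs_ge_zero power2_abs power_mono)
    thus "ennreal ((gl z \<theta> \<bullet> u)\<^sup>2) \<le> ennreal ((norm (gl z \<theta>))\<^sup>2) * ennreal ((norm u)\<^sup>2)"
      by (simp add: ennreal_mult[symmetric] power_mult_distrib ennreal_leI)
  qed
  also have "\<dots> = (\<integral>\<^sup>+z. ennreal ((norm (gl z \<theta>))\<^sup>2) \<partial>mus) * ennreal ((norm u)\<^sup>2)"
    by (rule nn_integral_multc) measurable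
  also have "\<dots> \<le> ennreal G * ennreal ((norm u)\<^sup>2)"
    by (intro mult_right_mono A3star) auto
  also have "\<dots> = ennreal (G * (norm u)\<^sup>2)" using A3_pos by (simp add: ennreal_mult)
  finally show ?thesis .
qed

lemma DQ_sq:
  assumes h: "h > 0"
  shows "(\<integral>\<^sup>+z. ennreal (((loss z (\<theta> + h *\<^sub>R u) - loss z \<theta>) / h)\<^sup>2) \<partial>mus) \<le> ennreal (G * (norm u)\<^sup>2)"
proof -
  define F' where "F' z s = gl z (\<theta> + s *\<^sub>R u) \<bullet> u" for z s
  have F'm: "(\<lambda>(z, s). indicator {0..h} s * ennreal ((F' z s)\<^sup>2)) \<in> borel_measurable (mus \<Otimes>\<^sub>M lborel)"
  proof -
    have "(\<lambda>x. gl (fst x) (\<theta> + snd x *\<^sub>R u)) \<in> borel_measurable (Mz \<Otimes>\<^sub>M lborel)"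
      by measurable
    hence "(\<lambda>x. indicator {0..h} (snd x) * ennreal ((gl (fst x) (\<theta> + snd x *\<^sub>R u) \<bullet> u)\<^sup>2)) \<in> borel_measurable (Mz \<Otimes>\<^sub>M lborel)"
      by measurable
    moreover have "sets (mus \<Otimes>\<^sub>M lborel) = sets (Mz \<Otimes>\<^sub>M lborel)"
      by (intro sets_pair_measure_cong) auto
    ultimately show ?thesis
      by (simp add: F'_def case_prod_beta' cong: measurable_cong_sets)
  qed
  have pw: "ennreal (((loss z (\<theta> + h *\<^sub>R u) - loss z \<theta>) / h)\<^sup>2)
      \<le> ennreal (1 / h) * (\<integral>\<^sup>+s. indicator {0..h} s * ennreal ((F' z s)\<^sup>2) \<partial>lborel)" if z: "z \<in> space mus" for z
  proof -
    have zM: "z \<in> space Mz" using z by simp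
    have D: "((\<lambda>s. loss z (\<theta> + s *\<^sub>R u)) has_real_derivative F' z s) (at s)" for s
      unfolding F'_def by (rule line_deriv) (rule loss_diff[OF zM])
    have Fm: "F' z \<in> borel_measurable borel" unfolding F'_def
    proof -
      have "(\<lambda>s. gl z (\<theta> + s *\<^sub>R u)) \<in> borel_measurable borel"
        using zM by measurable
      thus "(\<lambda>s. gl z (\<theta> + s *\<^sub>R u) \<bullet> u) \<in> borel_measurable borel" by measurable
    qed
    have b: "ennreal ((loss z (\<theta> + h *\<^sub>R u) - loss z (\<theta> + 0 *\<^sub>R u))\<^sup>2) \<le> ennreal h * (\<integral>\<^sup>+s. indicator {0..h} s * ennreal ((F' z s)\<^sup>2) \<partial>lborel)"
      by (rule ftc_sq_bound[OF h D Fm])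
    have "ennreal (((loss z (\<theta> + h *\<^sub>R u) - loss z \<theta>) / h)\<^sup>2) = ennreal (1 / h) * ennreal (1 / h) * ennreal ((loss z (\<theta> + h *\<^sub>R u) - loss z \<theta>)\<^sup>2)"
      using h by (simp add: ennreal_mult[symmetric] power_divide power2_eq_square)
    also have "\<dots> \<le> ennreal (1 / h) * ennreal (1 / h) * (ennreal h * (\<integral>\<^sup>+s. indicator {0..h} s * ennreal ((F' z s)\<^sup>2) \<partial>lborel))"
      using b by (intro mult_left_mono) auto
    also have "\<dots> = ennreal (1 / h) * (ennreal (1 / h) * ennreal h) * (\<integral>\<^sup>+s. indicator {0..h} s * ennreal ((F' z s)\<^sup>2) \<partial>lborel)"
      by (simp add: mult.assoc)
    also have "ennreal (1 / h) * ennreal h = 1" using h by (simp add: ennreal_mult[symmetric])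
    finally show ?thesis by simp
  qed
  have "(\<integral>\<^sup>+z. ennreal (((loss z (\<theta> + h *\<^sub>R u) - loss z \<theta>) / h)\<^sup>2) \<partial>mus)
      \<le> (\<integral>\<^sup>+z. ennreal (1 / h) * (\<integral>\<^sup>+s. indicator {0..h} s * ennreal ((F' z s)\<^sup>2) \<partial>lborel) \<partial>mus)"
    by (intro nn_integral_mono pw)
  also have "\<dots> = ennreal (1 / h) * (\<integral>\<^sup>+z. (\<integral>\<^sup>+s. indicator {0..h} s * ennreal ((F' z s)\<^sup>2) \<partial>lborel) \<partial>mus)"
    by (rule nn_integral_cmult) (use lborel.borel_measurable_nn_integral_fst[OF F'm] in simp)
  also have "(\<integral>\<^sup>+z. (\<integral>\<^sup>+s. indicator {0..h} s * ennreal ((F' z s)\<^sup>2) \<partial>lborel) \<partial>mus)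
      = (\<integral>\<^sup>+s. (\<integral>\<^sup>+z. indicator {0..h} s * ennreal ((F' z s)\<^sup>2) \<partial>mus) \<partial>lborel)"
  proof -
    have psf: "pair_sigma_finite mus lborel"
      unfolding pair_sigma_finite_def
      using prob_mus prob_space_imp_sigma_finite lborel.sigma_finite_measure_axioms by blast
    show ?thesis
      using pair_sigma_finite.Fubini'[OF psf, of "\<lambda>z s. indicator {0..h} s * ennreal ((F' z s)\<^sup>2)"] F'm
      by simp
  qed
  also have "\<dots> \<le> (\<integral>\<^sup>+s. ennreal (G * (norm u)\<^sup>2) * indicator {0..h} s \<partial>lborel)"
  proof (intro nn_integral_mono)
    fix s
    have "(\<integral>\<^sup>+z. indicator {0..h} s * ennreal ((F' z s)\<^sup>2) \<partial>mus) = indicator {0..h} s * (\<integral>\<^sup>+z. ennreal ((F' z s)\<^sup>2) \<partial>mus)"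
      by (rule nn_integral_cmult) (simp add: F'_def)
    also have "\<dots> \<le> indicator {0..h} s * ennreal (G * (norm u)\<^sup>2)"
      unfolding F'_def by (intro mult_left_mono gl_u_sq) auto
    finally show "(\<integral>\<^sup>+z. indicator {0..h} s * ennreal ((F' z s)\<^sup>2) \<partial>mus) \<le> ennreal (G * (norm u)\<^sup>2) * indicator {0..h} s"
      by (simp add: mult.commute)
  qed
  also have "\<dots> = ennreal (G * (norm u)\<^sup>2) * ennreal h"
    using h by (simp add: nn_integral_cmult_indicator)
  finally have "(\<integral>\<^sup>+z. ennreal (((loss z (\<theta> + h *\<^sub>R u) - loss z \<theta>) / h)\<^sup>2) \<partial>mus)
      \<le> ennreal (1 / h) * (ennreal (G * (norm u)\<^sup>2) * ennreal h)"
    by (simp add: mult_left_mono)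
  also have "\<dots> = ennreal (G * (norm u)\<^sup>2)"
    using h A3_pos by (simp add: ennreal_mult[symmetric])
  finally show ?thesis .
qed

end



lemma abs_le_min_sq:
  fixes x K :: real assumes K: "K > 0" shows "\<bar>x\<bar> \<le> min \<bar>x\<bar> K + x\<^sup>2 / K"
proof (cases "\<bar>x\<bar> \<le> K")
  case True thus ?thesis using K by (simp add: min_def)
next
  case False
  hence "K * \<bar>x\<bar> \<le> \<bar>x\<bar> * \<bar>x\<bar>" using K by (intro mult_right_mono) auto
  hence "\<bar>x\<bar> \<le> x\<^sup>2 / K" using K by (simp add: field_simps power2_eq_square)
  thus ?thesis using K False by (simp add: min_def)
qed

lemma L2_conv:
  fixes s :: "nat \<Rightarrow> 'a \<Rightarrow> real"
  assumes fm: "finite_measure M"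
    and lim: "\<And>x. x \<in> space M \<Longrightarrow> (\<lambda>n. s n x) \<longlonglongrightarrow> f x"
    and si: "\<And>n. integrable M (s n)" and fi: "integrable M f"
    and sqi: "\<And>n. integrable M (\<lambda>x. (s n x - f x)\<^sup>2)"
    and sqb: "\<And>n. (\<integral>x. (s n x - f x)\<^sup>2 \<partial>M) \<le> B" and B: "B \<ge> 0"
  shows "(\<lambda>n. \<integral>x. s n x \<partial>M) \<longlonglongrightarrow> (\<integral>x. f x \<partial>M)"
proof (unfold LIMSEQ_iff, intro allI impI)
  interpret finite_measure M by fact
  fix r :: real assume r: "r > 0"
  define K where "K = 4 * (B + 1) / r"
  have K: "K > 0" using r B by (simp add: K_def)
  have BK: "B / K < r / 2"
  proof -
    have "B / K = B * r / (4 * (B + 1))" using r B by (simp add: K_def field_simps)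
    also have "\<dots> < r / 2" using r B by (simp add: field_simps add_pos_nonneg)
    finally show ?thesis .
  qed
  have [measurable]: "s n \<in> borel_measurable M" for n using si by auto
  have [measurable]: "f \<in> borel_measurable M" using fi by auto
  have "(\<lambda>n. \<integral>x. min \<bar>s n x - f x\<bar> K \<partial>M) \<longlonglongrightarrow> (\<integral>x. 0 \<partial>M)"
  proof (rule integral_dominated_convergence[where w="\<lambda>x. K"])
    show "AE x in M. (\<lambda>n. min \<bar>s n x - f x\<bar> K) \<longlonglongrightarrow> 0"
    proof (rule AE_I2)
      fix x assume x: "x \<in> space M"
      have "(\<lambda>n. min \<bar>s n x - f x\<bar> K) \<longlonglongrightarrow> min \<bar>f x - f x\<bar> K"
        by (intro tendsto_intros lim[OF x])
      thus "(\<lambda>n. min \<bar>s n x - f x\<bar> K) \<longlonglongrightarrow> 0" using K by simp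
    qed
    show "AE x in M. norm (min \<bar>s n x - f x\<bar> K) \<le> K" for n using K by (intro AE_I2) auto
  qed auto
  hence "\<exists>no. \<forall>n\<ge>no. \<bar>(\<integral>x. min \<bar>s n x - f x\<bar> K \<partial>M)\<bar> < r / 2"
    using r unfolding LIMSEQ_iff by (metis diff_zero half_gt_zero integral_zero real_norm_def)
  then obtain no where no: "\<And>n. n \<ge> no \<Longrightarrow> \<bar>(\<integral>x. min \<bar>s n x - f x\<bar> K \<partial>M)\<bar> < r / 2" by blast
  show "\<exists>no. \<forall>n\<ge>no. norm ((\<integral>x. s n x \<partial>M) - (\<integral>x. f x \<partial>M)) < r"
  proof (intro exI allI impI)
    fix n assume n: "n \<ge> no"
    have "norm ((\<integral>x. s n x \<partial>M) - (\<integral>x. f x \<partial>M)) = \<bar>\<integral>x. (s n x - f x) \<partial>M\<bar>"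
      using si fi by simp
    also have "\<dots> \<le> (\<integral>x. \<bar>s n x - f x\<bar> \<partial>M)" by (rule integral_abs_bound)
    also have "\<dots> \<le> (\<integral>x. min \<bar>s n x - f x\<bar> K + (s n x - f x)\<^sup>2 / K \<partial>M)"
    proof (rule integral_mono)
      show "integrable M (\<lambda>x. \<bar>s n x - f x\<bar>)" using si fi by auto
      have "integrable M (\<lambda>x. min \<bar>s n x - f x\<bar> K)"
        by (rule Bochner_Integration.integrable_bound[where f="\<lambda>x. K"]) (use K in auto)
      thus "integrable M (\<lambda>x. min \<bar>s n x - f x\<bar> K + (s n x - f x)\<^sup>2 / K)"
        using sqi by auto
      show "\<bar>s n x - f x\<bar> \<le> min \<bar>s n x - f x\<bar> K + (s n x - f x)\<^sup>2 / K" for x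
        by (rule abs_le_min_sq[OF K])
    qed
    also have "\<dots> = (\<integral>x. min \<bar>s n x - f x\<bar> K \<partial>M) + (\<integral>x. (s n x - f x)\<^sup>2 \<partial>M) / K"
    proof -
      have "integrable M (\<lambda>x. min \<bar>s n x - f x\<bar> K)"
        by (rule Bochner_Integration.integrable_bound[where f="\<lambda>x. K"]) (use K in auto)
      thus ?thesis using sqi by simp
    qed
    also have "\<dots> < r / 2 + r / 2"
    proof (rule add_less_le_mono)
      show "(\<integral>x. min \<bar>s n x - f x\<bar> K \<partial>M) < r / 2" using no[OF n] by simp
      have "(\<integral>x. (s n x - f x)\<^sup>2 \<partial>M) / K \<le> B / K" using sqb K by (simp add: divide_right_mono)
      thus "(\<integral>x. (s n x - f x)\<^sup>2 \<partial>M) / K \<le> r / 2" using BK by linarith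
    qed
    finally show "norm ((\<integral>x. s n x \<partial>M) - (\<integral>x. f x \<partial>M)) < r" by simp
  qed
qed




lemma hseq_lim: "(\<lambda>n. 1 / real (Suc n)) \<longlonglongrightarrow> 0"
  using LIMSEQ_Suc[OF lim_1_over_n] by simp

lemma deriv_seq:
  fixes f :: "real \<Rightarrow> real"
  assumes "(f has_real_derivative D) (at 0)"
  shows "(\<lambda>n. (f (1 / real (Suc n)) - f 0) / (1 / real (Suc n))) \<longlonglongrightarrow> D"
proof -
  have "(\<lambda>h. (f (0 + h) - f 0) / h) \<midarrow>0\<rightarrow> D" using assms by (simp add: DERIV_def)
  hence "((\<lambda>h. (f (0 + h) - f 0) / h) \<circ> (\<lambda>n. 1 / real (Suc n))) \<longlonglongrightarrow> D"
    using hseq_lim by (subst (asm) tendsto_at_iff_sequentially) auto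
  thus ?thesis by (simp add: o_def)
qed

context sgd begin

lemma AE_pstar: "AE z in Mz. 0 \<le> pstar z" by (rule AE_I2) (rule pstar_nonneg)
lemma AE_p: "AE z in Mz. 0 \<le> p t z" by (rule AE_I2) (rule p_nonneg)

lemma loss_int_mus: "integrable mus (\<lambda>z. loss z \<theta>)"
  using L_integrable[of \<theta>] by (subst integrable_density) (auto simp: AE_pstar)

lemma L_mus: "L \<theta> = (\<integral>z. loss z \<theta> \<partial>mus)"
  using L_def[of \<theta>] by (subst integral_density) (auto simp: AE_pstar)

lemma interchange: "(\<integral>z. gl z \<theta> \<bullet> u \<partial>mus) = gradL \<theta> \<bullet> u"
proof -
  define h where "h n = 1 / real (Suc n)" for n
  have h: "h n > 0" for n by (simp add: h_def)
  define DQ where "DQ n z = (loss z (\<theta> + h n *\<^sub>R u) - loss z \<theta>) / h n" for n z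
  define g where "g z = gl z \<theta> \<bullet> u" for z
  have DQm[measurable]: "DQ n \<in> borel_measurable mus" for n
    unfolding DQ_def by measurable
  have gm[measurable]: "g \<in> borel_measurable mus" unfolding g_def by measurable
  have DQsq: "(\<integral>\<^sup>+z. ennreal ((DQ n z)\<^sup>2) \<partial>mus) \<le> ennreal (G * (norm u)\<^sup>2)" for n
    unfolding DQ_def by (rule DQ_sq[OF h])
  have gsq: "(\<integral>\<^sup>+z. ennreal ((g z)\<^sup>2) \<partial>mus) \<le> ennreal (G * (norm u)\<^sup>2)"
    unfolding g_def by (rule gl_u_sq)
  have B0: "G * (norm u)\<^sup>2 \<ge> 0" using A3_pos by simp
  note sqDQ = sq_integrable[OF finite_mus DQm DQsq]
  note sqg = sq_integrable[OF finite_mus gm gsq]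
  have lim1: "(\<lambda>n. \<integral>z. DQ n z \<partial>mus) \<longlonglongrightarrow> (\<integral>z. g z \<partial>mus)"
  proof (rule L2_conv[OF finite_mus _ sqDQ(1) sqg(1), where B="4 * (G * (norm u)\<^sup>2)"])
    fix z assume z: "z \<in> space mus"
    hence zM: "z \<in> space Mz" by simp
    have "((\<lambda>s. loss z (\<theta> + s *\<^sub>R u)) has_real_derivative gl z \<theta> \<bullet> u) (at 0)"
      using line_deriv[of "loss z" "gl z \<theta>" \<theta> 0 u] loss_diff[OF zM, of \<theta>] by simp
    from deriv_seq[OF this] show "(\<lambda>n. DQ n z) \<longlonglongrightarrow> g z"
      by (simp add: DQ_def g_def h_def)
  next
    fix n
    have le: "(DQ n z - g z)\<^sup>2 \<le> 2 * (DQ n z)\<^sup>2 + 2 * (g z)\<^sup>2" for z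
    proof -
      have "0 \<le> (DQ n z + g z)\<^sup>2" by simp
      thus ?thesis by (simp add: power2_eq_square algebra_simps)
    qed
    show i: "integrable mus (\<lambda>z. (DQ n z - g z)\<^sup>2)"
      by (rule Bochner_Integration.integrable_bound[where f="\<lambda>z. 2 * (DQ n z)\<^sup>2 + 2 * (g z)\<^sup>2"])
         (use sqDQ(2)[of n] sqg(2) le in auto)
    have "(\<integral>z. (DQ n z - g z)\<^sup>2 \<partial>mus) \<le> (\<integral>z. 2 * (DQ n z)\<^sup>2 + 2 * (g z)\<^sup>2 \<partial>mus)"
      by (rule integral_mono[OF i]) (use sqDQ(2)[of n] sqg(2) le in auto)
    also have "\<dots> = 2 * (\<integral>z. (DQ n z)\<^sup>2 \<partial>mus) + 2 * (\<integral>z. (g z)\<^sup>2 \<partial>mus)"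
      using sqDQ(2)[of n] sqg(2) by simp
    also have "\<dots> \<le> 2 * (G * (norm u)\<^sup>2) + 2 * (G * (norm u)\<^sup>2)"
      using sqDQ(3)[of n] sqg(3) B0 by simp
    finally show "(\<integral>z. (DQ n z - g z)\<^sup>2 \<partial>mus) \<le> 4 * (G * (norm u)\<^sup>2)" by simp
  qed (use B0 in simp)
  have eq: "(\<integral>z. DQ n z \<partial>mus) = (L (\<theta> + h n *\<^sub>R u) - L \<theta>) / h n" for n
    unfolding DQ_def L_mus using loss_int_mus by simp
  have "((\<lambda>s. L (\<theta> + s *\<^sub>R u)) has_real_derivative gradL \<theta> \<bullet> u) (at 0)"
    using line_deriv[of L "gradL \<theta>" \<theta> 0 u] A1_diff[of \<theta>] by simp
  from deriv_seq[OF this] have lim2: "(\<lambda>n. \<integral>z. DQ n z \<partial>mus) \<longlonglongrightarrow> gradL \<theta> \<bullet> u"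
    by (simp add: eq h_def)
  from LIMSEQ_unique[OF lim1 lim2] show ?thesis by (simp add: g_def)
qed

end



context sgd begin

lemma gl_u_sq_mu: "(\<integral>\<^sup>+z. ennreal ((gl z \<theta> \<bullet> u)\<^sup>2) \<partial>mu t) \<le> ennreal (G * (norm u)\<^sup>2)"
proof -
  have "(\<integral>\<^sup>+z. ennreal ((gl z \<theta> \<bullet> u)\<^sup>2) \<partial>mu t) \<le> (\<integral>\<^sup>+z. ennreal ((norm (gl z \<theta>))\<^sup>2) * ennreal ((norm u)\<^sup>2) \<partial>mu t)"
  proof (intro nn_integral_mono)
    fix z
    have "\<bar>gl z \<theta> \<bullet> u\<bar> \<le> norm (gl z \<theta>) * norm u" by (rule Cauchy_Schwarz_ineq2)
    hence "(gl z \<theta> \<bullet> u)\<^sup>2 \<le> (norm (gl z \<theta>) * norm u)\<^sup>2"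
      by (metis abs_ge_zero power2_abs power_mono)
    thus "ennreal ((gl z \<theta> \<bullet> u)\<^sup>2) \<le> ennreal ((norm (gl z \<theta>))\<^sup>2) * ennreal ((norm u)\<^sup>2)"
      by (simp add: ennreal_mult[symmetric] power_mult_distrib ennreal_leI)
  qed
  also have "\<dots> = (\<integral>\<^sup>+z. ennreal ((norm (gl z \<theta>))\<^sup>2) \<partial>mu t) * ennreal ((norm u)\<^sup>2)"
    by (rule nn_integral_multc) measurable
  also have "\<dots> \<le> ennreal G * ennreal ((norm u)\<^sup>2)"
    by (intro mult_right_mono A3') auto
  also have "\<dots> = ennreal (G * (norm u)\<^sup>2)" using A3_pos by (simp add: ennreal_mult)
  finally show ?thesis .
qed

lemma grad_bound: "(norm (gradL \<theta>))\<^sup>2 \<le> G"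
proof -
  define v where "v = gradL \<theta>"
  define g where "g z = gl z \<theta> \<bullet> v" for z
  have gm[measurable]: "g \<in> borel_measurable mus" unfolding g_def by measurable
  note sqg = sq_integrable[OF finite_mus gm gl_u_sq[of \<theta> v, folded g_def]]
  have B0: "G * (norm v)\<^sup>2 \<ge> 0" using A3_pos by simp
  interpret mus: prob_space mus by (rule prob_mus)
  have sp1: "measure mus (space Mz) = 1" using mus.prob_space by simp
  have v2: "(norm v)\<^sup>2 = (\<integral>z. g z \<partial>mus)"
    unfolding g_def v_def interchange by (simp add: power2_norm_eq_inner)
  have "((norm v)\<^sup>2)\<^sup>2 \<le> 4 * (1/2) * (G * (norm v)\<^sup>2 / 2)"
  proof (rule cs_lemma)
    fix a :: real assume a: "a > 0"
    have "\<bar>(norm v)\<^sup>2\<bar> \<le> (\<integral>z. \<bar>g z\<bar> \<partial>mus)" unfolding v2 by (rule integral_abs_bound)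
    also have "\<dots> \<le> (\<integral>z. a / 2 + (g z)\<^sup>2 / (2 * a) \<partial>mus)"
      by (rule integral_mono) (use sqg abs_le_amgm[OF a] in auto)
    also have "\<dots> = a / 2 + (\<integral>z. (g z)\<^sup>2 \<partial>mus) / (2 * a)"
      using sqg by (simp add: sp1)
    also have "\<dots> \<le> a / 2 + (G * (norm v)\<^sup>2) / (2 * a)"
      using sqg(3) B0 a by (simp add: divide_right_mono)
    finally show "\<bar>(norm v)\<^sup>2\<bar> \<le> a * (1/2) + (G * (norm v)\<^sup>2 / 2) / a" by simp
  qed (use B0 in auto)
  hence "(norm v)\<^sup>2 * (norm v)\<^sup>2 \<le> G * (norm v)\<^sup>2" by (simp add: power2_eq_square)
  hence "(norm v)\<^sup>2 \<le> G"
  proof (cases "norm v = 0")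
    case False
    hence "(norm v)\<^sup>2 > 0" by simp
    moreover assume "(norm v)\<^sup>2 * (norm v)\<^sup>2 \<le> G * (norm v)\<^sup>2"
    ultimately show ?thesis by (metis mult_right_le_imp_le)
  qed (use A3_pos in simp)
  thus ?thesis by (simp add: v_def)
qed

end



context sgd begin

lemma bias:
  "(\<integral>z. gradL \<theta> \<bullet> gl z \<theta> \<partial>mu t) \<ge> (norm (gradL \<theta>))\<^sup>2 - G * sqrt (2 * c t)"
proof -
  define v where "v = gradL \<theta>"
  define g where "g z = gl z \<theta> \<bullet> v" for z
  define q where "q z = norm (gl z \<theta>)" for z
  have gm[measurable]: "g \<in> borel_measurable Mz" unfolding g_def by measurable
  have qm[measurable]: "q \<in> borel_measurable Mz" unfolding q_def by measurable
  have gm1: "g \<in> borel_measurable (mu t)" by simp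
  have gm2: "g \<in> borel_measurable mus" by simp
  have qm1: "q \<in> borel_measurable (mu t)" by simp
  have qm2: "q \<in> borel_measurable mus" by simp
  note sg1 = sq_integrable[OF finite_mu gm1 gl_u_sq_mu[where \<theta>=\<theta> and u=v and t=t, folded g_def]]
  note sg2 = sq_integrable[OF finite_mus gm2 gl_u_sq[where \<theta>=\<theta> and u=v, folded g_def]]
  note sq1 = sq_integrable[OF finite_mu qm1 A3'[where \<theta>=\<theta> and t=t, folded q_def]]
  note sq2 = sq_integrable[OF finite_mus qm2 A3star[where \<theta>=\<theta>, folded q_def]]
  have ig1: "integrable Mz (\<lambda>z. p t z * g z)" using sg1(1) by (subst (asm) integrable_density) (auto simp: AE_p)
  have ig2: "integrable Mz (\<lambda>z. pstar z * g z)" using sg2(1) by (subst (asm) integrable_density) (auto simp: AE_pstar)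
  have iq1: "integrable Mz (\<lambda>z. p t z * (q z)\<^sup>2)" using sq1(2) by (subst (asm) integrable_density) (auto simp: AE_p)
  have iq2: "integrable Mz (\<lambda>z. pstar z * (q z)\<^sup>2)" using sq2(2) by (subst (asm) integrable_density) (auto simp: AE_pstar)
  have Iq1: "(\<integral>z. p t z * (q z)\<^sup>2 \<partial>Mz) \<le> G"
    using sq1(3) A3_pos by (subst (asm) integral_density) (auto simp: AE_p)
  have Iq2: "(\<integral>z. pstar z * (q z)\<^sup>2 \<partial>Mz) \<le> G"
    using sq2(3) A3_pos by (subst (asm) integral_density) (auto simp: AE_pstar)
  have I1: "(\<integral>z. gradL \<theta> \<bullet> gl z \<theta> \<partial>mu t) = (\<integral>z. p t z * g z \<partial>Mz)"
    by (subst integral_density) (auto simp: AE_p g_def v_def inner_commute)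
  have I2: "(\<integral>z. pstar z * g z \<partial>Mz) = (norm v)\<^sup>2"
  proof -
    have "(\<integral>z. pstar z * g z \<partial>Mz) = (\<integral>z. g z \<partial>mus)"
      by (subst integral_density) (auto simp: AE_pstar)
    also have "\<dots> = (norm v)\<^sup>2" unfolding g_def interchange by (simp add: power2_norm_eq_inner v_def)
    finally show ?thesis .
  qed
  define D where "D = (\<integral>z. (p t z - pstar z) * g z \<partial>Mz)"
  have DI: "D = (\<integral>z. p t z * g z \<partial>Mz) - (norm v)\<^sup>2"
    unfolding D_def I2[symmetric] using ig1 ig2 by (simp add: left_diff_distrib)
  have vG: "(norm v)\<^sup>2 \<le> G" unfolding v_def by (rule grad_bound)
  have c0: "c t \<ge> 0" by (rule c_nonneg)
  have iw: "integrable Mz (\<lambda>z. \<bar>p t z - pstar z\<bar>)" by (rule diff_int)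
  have iwq: "integrable Mz (\<lambda>z. \<bar>p t z - pstar z\<bar> * (q z)\<^sup>2)"
  proof (rule Bochner_Integration.integrable_bound[where f="\<lambda>z. p t z * (q z)\<^sup>2 + pstar z * (q z)\<^sup>2"])
    show "integrable Mz (\<lambda>z. p t z * (q z)\<^sup>2 + pstar z * (q z)\<^sup>2)" using iq1 iq2 by simp
    show "AE z in Mz. norm (\<bar>p t z - pstar z\<bar> * (q z)\<^sup>2) \<le> norm (p t z * (q z)\<^sup>2 + pstar z * (q z)\<^sup>2)"
    proof (rule AE_I2)
      fix z assume z: "z \<in> space Mz"
      have "\<bar>p t z - pstar z\<bar> \<le> p t z + pstar z" using p_nonneg[OF z, of t] pstar_nonneg[OF z] by simp
      hence "\<bar>p t z - pstar z\<bar> * (q z)\<^sup>2 \<le> (p t z + pstar z) * (q z)\<^sup>2" by (simp add: mult_right_mono)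
      thus "norm (\<bar>p t z - pstar z\<bar> * (q z)\<^sup>2) \<le> norm (p t z * (q z)\<^sup>2 + pstar z * (q z)\<^sup>2)"
        using p_nonneg[OF z, of t] pstar_nonneg[OF z] by (simp add: distrib_right)
    qed
  qed simp
  have Iwq: "(\<integral>z. \<bar>p t z - pstar z\<bar> * (q z)\<^sup>2 \<partial>Mz) \<le> 2 * G"
  proof -
    have "(\<integral>z. \<bar>p t z - pstar z\<bar> * (q z)\<^sup>2 \<partial>Mz) \<le> (\<integral>z. p t z * (q z)\<^sup>2 + pstar z * (q z)\<^sup>2 \<partial>Mz)"
    proof (rule integral_mono_AE[OF iwq])
      show "integrable Mz (\<lambda>z. p t z * (q z)\<^sup>2 + pstar z * (q z)\<^sup>2)" using iq1 iq2 by simp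
      show "AE z in Mz. \<bar>p t z - pstar z\<bar> * (q z)\<^sup>2 \<le> p t z * (q z)\<^sup>2 + pstar z * (q z)\<^sup>2"
      proof (rule AE_I2)
        fix z assume z: "z \<in> space Mz"
        have "\<bar>p t z - pstar z\<bar> \<le> p t z + pstar z" using p_nonneg[OF z, of t] pstar_nonneg[OF z] by simp
        hence "\<bar>p t z - pstar z\<bar> * (q z)\<^sup>2 \<le> (p t z + pstar z) * (q z)\<^sup>2" by (simp add: mult_right_mono)
        thus "\<bar>p t z - pstar z\<bar> * (q z)\<^sup>2 \<le> p t z * (q z)\<^sup>2 + pstar z * (q z)\<^sup>2" by (simp add: distrib_right)
      qed
    qed
    also have "\<dots> \<le> 2 * G" using iq1 iq2 Iq1 Iq2 by simp
    finally show ?thesis .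
  qed
  have "D\<^sup>2 \<le> 4 * (norm v * c t / 2) * (norm v * G)"
  proof (rule cs_lemma)
    fix a :: real assume a: "a > 0"
    have "\<bar>D\<bar> \<le> (\<integral>z. \<bar>(p t z - pstar z) * g z\<bar> \<partial>Mz)" unfolding D_def by (rule integral_abs_bound)
    also have "\<dots> \<le> (\<integral>z. norm v * (a / 2) * \<bar>p t z - pstar z\<bar> + norm v / (2 * a) * (\<bar>p t z - pstar z\<bar> * (q z)\<^sup>2) \<partial>Mz)"
    proof (rule integral_mono)
      show "integrable Mz (\<lambda>z. \<bar>(p t z - pstar z) * g z\<bar>)" using ig1 ig2 by (simp add: left_diff_distrib)
      show "integrable Mz (\<lambda>z. norm v * (a / 2) * \<bar>p t z - pstar z\<bar> + norm v / (2 * a) * (\<bar>p t z - pstar z\<bar> * (q z)\<^sup>2))"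
        using iw iwq by simp
      fix z
      have gq: "\<bar>g z\<bar> \<le> norm v * q z" unfolding g_def q_def
        using Cauchy_Schwarz_ineq2[of "gl z \<theta>" v] by (simp add: mult.commute)
      have "\<bar>g z\<bar> \<le> norm v * (a / 2 + (q z)\<^sup>2 / (2 * a))"
        using gq abs_le_amgm[OF a, of "q z"] q_def
        by (smt (verit, best) abs_of_nonneg mult_left_mono norm_ge_zero)
      hence "\<bar>p t z - pstar z\<bar> * \<bar>g z\<bar> \<le> \<bar>p t z - pstar z\<bar> * (norm v * (a / 2 + (q z)\<^sup>2 / (2 * a)))"
        by (simp add: mult_left_mono)
      moreover have "\<bar>p t z - pstar z\<bar> * (norm v * (a / 2 + (q z)\<^sup>2 / (2 * a)))
          = norm v * (a / 2) * \<bar>p t z - pstar z\<bar> + norm v / (2 * a) * (\<bar>p t z - pstar z\<bar> * (q z)\<^sup>2)"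
        using a by (simp add: field_simps)
      moreover have "\<bar>(p t z - pstar z) * g z\<bar> = \<bar>p t z - pstar z\<bar> * \<bar>g z\<bar>" by (rule abs_mult)
      ultimately show "\<bar>(p t z - pstar z) * g z\<bar> \<le> norm v * (a / 2) * \<bar>p t z - pstar z\<bar> + norm v / (2 * a) * (\<bar>p t z - pstar z\<bar> * (q z)\<^sup>2)"
        by linarith
    qed
    also have "\<dots> = norm v * (a / 2) * c t + norm v / (2 * a) * (\<integral>z. \<bar>p t z - pstar z\<bar> * (q z)\<^sup>2 \<partial>Mz)"
      using iw iwq by (simp add: c_def)
    also have "\<dots> \<le> norm v * (a / 2) * c t + norm v / (2 * a) * (2 * G)"
      using Iwq a by (intro add_left_mono mult_left_mono) auto
    also have "\<dots> = a * (norm v * c t / 2) + norm v * G / a" using a by (simp add: field_simps)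
    finally show "\<bar>D\<bar> \<le> a * (norm v * c t / 2) + norm v * G / a" .
  qed (use c0 A3_pos in auto)
  also have "\<dots> = 2 * (norm v)\<^sup>2 * c t * G" by (simp add: power2_eq_square)
  also have "\<dots> \<le> 2 * G * c t * G" using vG c0 A3_pos by (simp add: mult_right_mono)
  also have "\<dots> = (G * sqrt (2 * c t))\<^sup>2" using c0 by (simp add: power_mult_distrib power2_eq_square)
  finally have "D\<^sup>2 \<le> (G * sqrt (2 * c t))\<^sup>2" .
  hence D2: "\<bar>D\<bar>\<^sup>2 \<le> (G * sqrt (2 * c t))\<^sup>2" by simp
  have "0 \<le> G * sqrt (2 * c t)" using A3_pos c0 by simp
  hence "\<bar>D\<bar> \<le> G * sqrt (2 * c t)" by (rule power2_le_imp_le[OF D2])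
  thus ?thesis using I1 DI by (simp add: v_def)
qed

end



primrec Phi :: "('z \<Rightarrow> 'p \<Rightarrow> 'p) \<Rightarrow> (nat \<Rightarrow> real) \<Rightarrow> nat \<Rightarrow> 'p \<times> (nat \<Rightarrow> 'z) \<Rightarrow> 'p::real_vector" where
  "Phi g e 0 x = fst x"
| "Phi g e (Suc t) x = Phi g e t x - e t *\<^sub>R g (snd x t) (Phi g e t x)"

context sgd begin

abbreviation "SS t \<equiv> (borel :: 'p measure) \<Otimes>\<^sub>M (\<Pi>\<^sub>M i\<in>{..<t}. Mz)"
definition "X t \<omega> = (\<Theta> 0 \<omega>, \<lambda>i\<in>{..<t}. Z i \<omega>)"

lemma Z_meas'[measurable]: "Z t \<in> measurable P Mz" by (rule Z_meas)
lemma Theta0_meas'[measurable]: "\<Theta> 0 \<in> borel_measurable P" by (rule Theta0_meas)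

lemma X_meas[measurable]: "X t \<in> measurable P (SS t)"
  unfolding X_def by measurable

lemma Phi_meas: "t \<le> n \<Longrightarrow> Phi gl \<eta> t \<in> borel_measurable (SS n)"
proof (induction t)
  case 0 thus ?case by simp
next
  case (Suc t)
  hence m[measurable]: "Phi gl \<eta> t \<in> borel_measurable (SS n)" by simp
  have tn: "t \<in> {..<n}" using Suc by simp
  have s[measurable]: "(\<lambda>x. snd x t) \<in> measurable (SS n) Mz"
  proof -
    have "snd \<in> measurable (SS n) (\<Pi>\<^sub>M i\<in>{..<n}. Mz)" by (rule measurable_snd)
    moreover have "(\<lambda>f. f t) \<in> measurable (\<Pi>\<^sub>M i\<in>{..<n}. Mz) Mz"
      using measurable_component_singleton[OF tn, of "\<lambda>_. Mz"] by simp
    ultimately show ?thesis using measurable_comp by (simp add: o_def)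
  qed
  show ?case by simp measurable
qed

lemma Theta_eq: "\<omega> \<in> space P \<Longrightarrow> t \<le> n \<Longrightarrow> Phi gl \<eta> t (X n \<omega>) = \<Theta> t \<omega>"
proof (induction t)
  case 0 thus ?case by (simp add: X_def)
next
  case (Suc t)
  thus ?case by (simp add: X_def Theta_step)
qed

lemma Theta_meas[measurable]: "\<Theta> t \<in> borel_measurable P"
proof -
  have "(\<lambda>\<omega>. Phi gl \<eta> t (X t \<omega>)) \<in> borel_measurable P"
    using measurable_compose[OF X_meas Phi_meas[of t t]] by (simp add: o_def)
  thus ?thesis by (rule measurable_cong[THEN iffD1, rotated]) (simp add: Theta_eq)
qed

lemma law: "distr P (SS t \<Otimes>\<^sub>M Mz) (\<lambda>\<omega>. (X t \<omega>, Z t \<omega>)) = distr P (SS t) (X t) \<Otimes>\<^sub>M mu t"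
proof (rule pair_measure_eqI[symmetric])
  interpret P: prob_space P by (rule prob)
  interpret M1: prob_space "distr P (SS t) (X t)" by (rule P.prob_space_distr) simp
  interpret M2: prob_space "mu t" by (rule prob_mu)
  show "sigma_finite_measure (distr P (SS t) (X t))" by unfold_locales
  show "sigma_finite_measure (mu t)" by unfold_locales
  show "sets (distr P (SS t) (X t) \<Otimes>\<^sub>M mu t) = sets (distr P (SS t \<Otimes>\<^sub>M Mz) (\<lambda>\<omega>. (X t \<omega>, Z t \<omega>)))"
    by (simp only: sets_distr, rule sets_pair_measure_cong) simp_all
  fix A B assume A: "A \<in> sets (distr P (SS t) (X t))" and B: "B \<in> sets (mu t)"
  hence A': "A \<in> sets (SS t)" and B': "B \<in> sets Mz" by auto
  have "emeasure (distr P (SS t \<Otimes>\<^sub>M Mz) (\<lambda>\<omega>. (X t \<omega>, Z t \<omega>))) (A \<times> B)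
      = emeasure P {\<omega> \<in> space P. X t \<omega> \<in> A \<and> Z t \<omega> \<in> B}"
    using A' B' by (subst emeasure_distr) (simp_all, intro arg_cong[where f="emeasure P"], blast)
  also have "\<dots> = ennreal (measure P {\<omega> \<in> space P. X t \<omega> \<in> A \<and> Z t \<omega> \<in> B})"
    by (rule P.emeasure_eq_measure)
  also have "measure P {\<omega> \<in> space P. X t \<omega> \<in> A \<and> Z t \<omega> \<in> B}
      = measure P {\<omega> \<in> space P. X t \<omega> \<in> A} * measure (mu t) B"
    using Z_cond[OF A' B'] by (simp add: X_def)
  also have "ennreal (measure P {\<omega> \<in> space P. X t \<omega> \<in> A} * measure (mu t) B)
      = emeasure (distr P (SS t) (X t)) A * emeasure (mu t) B"
  proof -
    have "emeasure (distr P (SS t) (X t)) A = emeasure P {\<omega> \<in> space P. X t \<omega> \<in> A}"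
      using A' by (subst emeasure_distr) (simp_all, intro arg_cong[where f="emeasure P"], blast)
    also have "\<dots> = ennreal (measure P {\<omega> \<in> space P. X t \<omega> \<in> A})" by (rule P.emeasure_eq_measure)
    finally show ?thesis by (simp add: M2.emeasure_eq_measure ennreal_mult)
  qed
  finally show "emeasure (distr P (SS t) (X t)) A * emeasure (mu t) B
      = emeasure (distr P (SS t \<Otimes>\<^sub>M Mz) (\<lambda>\<omega>. (X t \<omega>, Z t \<omega>))) (A \<times> B)" by simp
qed


end


context sgd begin

lemma psf_law: "pair_sigma_finite (distr P (SS t) (X t)) (mu t)"
proof -
  interpret P: prob_space P by (rule prob)
  interpret M1: prob_space "distr P (SS t) (X t)" by (rule P.prob_space_distr) simp
  interpret M2: prob_space "mu t" by (rule prob_mu)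
  show ?thesis by unfold_locales
qed

lemma sets_law: "sets (distr P (SS t) (X t) \<Otimes>\<^sub>M mu t) = sets (SS t \<Otimes>\<^sub>M Mz)"
  by (rule sets_pair_measure_cong) simp_all

lemma F_meas:
  fixes f :: "'p \<Rightarrow> 'z \<Rightarrow> 'b::{second_countable_topology, topological_space}"
  assumes f: "(\<lambda>(\<theta>, z). f \<theta> z) \<in> borel_measurable (borel \<Otimes>\<^sub>M Mz)"
  shows "(\<lambda>(x, z). f (Phi gl \<eta> t x) z) \<in> borel_measurable (distr P (SS t) (X t) \<Otimes>\<^sub>M mu t)"
proof -
  have "(\<lambda>y. (Phi gl \<eta> t (fst y), snd y)) \<in> measurable (SS t \<Otimes>\<^sub>M Mz) (borel \<Otimes>\<^sub>M Mz)"
    using Phi_meas[of t t] by measurable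
  from measurable_compose[OF this f] have "(\<lambda>(x, z). f (Phi gl \<eta> t x) z) \<in> borel_measurable (SS t \<Otimes>\<^sub>M Mz)"
    by (simp add: case_prod_beta')
  thus ?thesis using sets_law[of t] by (simp cong: measurable_cong_sets)
qed

lemma transfer_nn:
  fixes f :: "'p \<Rightarrow> 'z \<Rightarrow> ennreal"
  assumes f: "(\<lambda>(\<theta>, z). f \<theta> z) \<in> borel_measurable (borel \<Otimes>\<^sub>M Mz)"
  shows "(\<integral>\<^sup>+\<omega>. f (\<Theta> t \<omega>) (Z t \<omega>) \<partial>P) = (\<integral>\<^sup>+\<omega>. (\<integral>\<^sup>+z. f (\<Theta> t \<omega>) z \<partial>mu t) \<partial>P)"
proof -
  interpret psf: pair_sigma_finite "distr P (SS t) (X t)" "mu t" by (rule psf_law)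
  define F where "F = (\<lambda>(x, z). f (Phi gl \<eta> t x) z)"
  have Fm: "F \<in> borel_measurable (distr P (SS t) (X t) \<Otimes>\<^sub>M mu t)" unfolding F_def by (rule F_meas[OF f])
  have Fm': "F \<in> borel_measurable (SS t \<Otimes>\<^sub>M Mz)" using Fm sets_law[of t] by (simp cong: measurable_cong_sets)
  have "(\<integral>\<^sup>+\<omega>. f (\<Theta> t \<omega>) (Z t \<omega>) \<partial>P) = (\<integral>\<^sup>+\<omega>. F (X t \<omega>, Z t \<omega>) \<partial>P)"
    by (intro nn_integral_cong) (simp add: F_def Theta_eq)
  also have "\<dots> = (\<integral>\<^sup>+y. F y \<partial>distr P (SS t \<Otimes>\<^sub>M Mz) (\<lambda>\<omega>. (X t \<omega>, Z t \<omega>)))"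
    by (rule nn_integral_distr[symmetric]) (simp_all add: Fm')
  also have "\<dots> = (\<integral>\<^sup>+y. F y \<partial>(distr P (SS t) (X t) \<Otimes>\<^sub>M mu t))" by (simp only: law)
  also have "\<dots> = (\<integral>\<^sup>+x. (\<integral>\<^sup>+z. F (x, z) \<partial>mu t) \<partial>distr P (SS t) (X t))"
    by (rule psf.M2.nn_integral_fst[symmetric, OF Fm])
  also have "\<dots> = (\<integral>\<^sup>+\<omega>. (\<integral>\<^sup>+z. F (X t \<omega>, z) \<partial>mu t) \<partial>P)"
    by (rule nn_integral_distr) (simp_all add: psf.M2.borel_measurable_nn_integral_fst[OF Fm, simplified])
  also have "\<dots> = (\<integral>\<^sup>+\<omega>. (\<integral>\<^sup>+z. f (\<Theta> t \<omega>) z \<partial>mu t) \<partial>P)"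
    by (intro nn_integral_cong) (simp add: F_def Theta_eq)
  finally show ?thesis .
qed

lemma transfer_int:
  fixes f :: "'p \<Rightarrow> 'z \<Rightarrow> real"
  assumes f: "(\<lambda>(\<theta>, z). f \<theta> z) \<in> borel_measurable (borel \<Otimes>\<^sub>M Mz)"
    and i: "integrable P (\<lambda>\<omega>. f (\<Theta> t \<omega>) (Z t \<omega>))"
  shows "integrable P (\<lambda>\<omega>. (\<integral>z. f (\<Theta> t \<omega>) z \<partial>mu t))"
    "(\<integral>\<omega>. f (\<Theta> t \<omega>) (Z t \<omega>) \<partial>P) = (\<integral>\<omega>. (\<integral>z. f (\<Theta> t \<omega>) z \<partial>mu t) \<partial>P)"
proof -
  interpret psf: pair_sigma_finite "distr P (SS t) (X t)" "mu t" by (rule psf_law)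
  define F where "F = (\<lambda>(x, z). f (Phi gl \<eta> t x) z)"
  have Fm: "F \<in> borel_measurable (distr P (SS t) (X t) \<Otimes>\<^sub>M mu t)" unfolding F_def by (rule F_meas[OF f])
  have Fm': "F \<in> borel_measurable (SS t \<Otimes>\<^sub>M Mz)" using Fm sets_law[of t] by (simp cong: measurable_cong_sets)
  have XZ: "(\<lambda>\<omega>. (X t \<omega>, Z t \<omega>)) \<in> measurable P (SS t \<Otimes>\<^sub>M Mz)" by simp
  have eqP: "(\<lambda>\<omega>. f (\<Theta> t \<omega>) (Z t \<omega>)) \<in> borel_measurable P \<Longrightarrow> True" by simp
  have i1: "integrable P (\<lambda>\<omega>. F (X t \<omega>, Z t \<omega>))"
    using i by (rule Bochner_Integration.integrable_cong[THEN iffD1, rotated 2]) (simp_all add: F_def Theta_eq)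
  have i2: "integrable (distr P (SS t) (X t) \<Otimes>\<^sub>M mu t) F"
    using i1 by (subst law[symmetric], subst integrable_distr_eq[OF XZ Fm'])
  have mI: "(\<lambda>x. \<integral>z. F (x, z) \<partial>mu t) \<in> borel_measurable (distr P (SS t) (X t))"
    using psf.M2.borel_measurable_lebesgue_integral[of "\<lambda>x z. F (x, z)"] Fm by simp
  have mI': "(\<lambda>x. \<integral>z. F (x, z) \<partial>mu t) \<in> borel_measurable (SS t)"
    using mI by simp
  have "integrable (distr P (SS t) (X t)) (\<lambda>x. \<integral>z. F (x, z) \<partial>mu t)"
    by (rule psf.integrable_fst'[OF i2])
  hence "integrable P (\<lambda>\<omega>. \<integral>z. F (X t \<omega>, z) \<partial>mu t)"
    by (subst (asm) integrable_distr_eq[OF X_meas mI'])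
  thus "integrable P (\<lambda>\<omega>. (\<integral>z. f (\<Theta> t \<omega>) z \<partial>mu t))"
    by (rule Bochner_Integration.integrable_cong[THEN iffD1, rotated 2]) (simp_all add: F_def Theta_eq)
  have "(\<integral>\<omega>. f (\<Theta> t \<omega>) (Z t \<omega>) \<partial>P) = (\<integral>\<omega>. F (X t \<omega>, Z t \<omega>) \<partial>P)"
    by (intro Bochner_Integration.integral_cong) (simp_all add: F_def Theta_eq)
  also have "\<dots> = (\<integral>y. F y \<partial>distr P (SS t \<Otimes>\<^sub>M Mz) (\<lambda>\<omega>. (X t \<omega>, Z t \<omega>)))"
    by (rule integral_distr[symmetric, OF XZ Fm'])
  also have "\<dots> = (\<integral>y. F y \<partial>(distr P (SS t) (X t) \<Otimes>\<^sub>M mu t))" by (simp only: law)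
  also have "\<dots> = (\<integral>x. (\<integral>z. F (x, z) \<partial>mu t) \<partial>distr P (SS t) (X t))"
    by (rule psf.integral_fst'[symmetric, OF i2])
  also have "\<dots> = (\<integral>\<omega>. (\<integral>z. F (X t \<omega>, z) \<partial>mu t) \<partial>P)"
    by (rule integral_distr[OF X_meas mI'])
  also have "\<dots> = (\<integral>\<omega>. (\<integral>z. f (\<Theta> t \<omega>) z \<partial>mu t) \<partial>P)"
    by (intro Bochner_Integration.integral_cong) (simp_all add: F_def Theta_eq)
  finally show "(\<integral>\<omega>. f (\<Theta> t \<omega>) (Z t \<omega>) \<partial>P) = (\<integral>\<omega>. (\<integral>z. f (\<Theta> t \<omega>) z \<partial>mu t) \<partial>P)" .
qed

end


context sgd begin

lemma gradL_cont: "continuous_on UNIV gradL"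
  using A1_lip by (rule lipschitz_on_continuous_on)

lemma gradL_meas[measurable]: "gradL \<in> borel_measurable borel"
  by (rule borel_measurable_continuous_onI[OF gradL_cont])

lemma L_cont: "continuous_on UNIV L"
  using A1_diff has_derivative_continuous by (simp add: continuous_on_eq_continuous_within) blast

lemma L_meas[measurable]: "L \<in> borel_measurable borel"
  by (rule borel_measurable_continuous_onI[OF L_cont])

lemma L_nonneg: "L \<theta> \<ge> 0"
  unfolding L_def using pstar_nonneg loss_nonneg
  by (intro Bochner_Integration.integral_nonneg) simp

lemma gl_swap[measurable]: "(\<lambda>x. gl (snd x) (fst x)) \<in> borel_measurable (borel \<Otimes>\<^sub>M Mz)"
  by measurable

lemma probP: "prob_space P" by (rule prob)

lemma finP: "finite_measure P" using prob by (simp add: prob_space_def)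

definition "gZ t \<omega> = gl (Z t \<omega>) (\<Theta> t \<omega>)"

lemma gZ_meas[measurable]: "gZ t \<in> borel_measurable P"
  unfolding gZ_def by measurable

lemma E_gsq:
  shows "integrable P (\<lambda>\<omega>. (norm (gZ t \<omega>))\<^sup>2)" "(\<integral>\<omega>. (norm (gZ t \<omega>))\<^sup>2 \<partial>P) \<le> G"
proof -
  interpret P: prob_space P by (rule prob)
  have m: "(\<lambda>(\<theta>, z). ennreal ((norm (gl z \<theta>))\<^sup>2)) \<in> borel_measurable (borel \<Otimes>\<^sub>M Mz)"
    by (simp add: case_prod_beta') measurable
  have "(\<integral>\<^sup>+\<omega>. ennreal ((norm (gZ t \<omega>))\<^sup>2) \<partial>P) = (\<integral>\<^sup>+\<omega>. (\<integral>\<^sup>+z. ennreal ((norm (gl z (\<Theta> t \<omega>)))\<^sup>2) \<partial>mu t) \<partial>P)"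
    unfolding gZ_def using transfer_nn[OF m, of t] by simp
  also have "\<dots> \<le> (\<integral>\<^sup>+\<omega>. ennreal G \<partial>P)"
    by (intro nn_integral_mono A3')
  also have "\<dots> = ennreal G" by (simp add: P.emeasure_space_1)
  finally have b: "(\<integral>\<^sup>+\<omega>. ennreal ((norm (gZ t \<omega>))\<^sup>2) \<partial>P) \<le> ennreal G" .
  have nm: "(\<lambda>\<omega>. norm (gZ t \<omega>)) \<in> borel_measurable P" by measurable
  note s = sq_integrable[OF finP nm b]
  show "integrable P (\<lambda>\<omega>. (norm (gZ t \<omega>))\<^sup>2)" by (rule s(2))
  show "(\<integral>\<omega>. (norm (gZ t \<omega>))\<^sup>2 \<partial>P) \<le> G" using s(3) A3_pos by simp
qed

lemma E_grad:
  shows "integrable P (\<lambda>\<omega>. (norm (gradL (\<Theta> t \<omega>)))\<^sup>2)"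
proof -
  interpret P: prob_space P by (rule prob)
  have aG: "\<bar>G\<bar> = G" using A3_pos by simp
  show ?thesis
    by (rule Bochner_Integration.integrable_bound[where f="\<lambda>_. G"]) (auto intro!: AE_I2 simp: grad_bound aG)
qed

lemma amgm2: "x * y \<le> (x\<^sup>2 + y\<^sup>2) / 2" for x y :: real
proof -
  have "0 \<le> (x - y)\<^sup>2" by simp
  thus ?thesis by (simp add: power2_eq_square algebra_simps)
qed

lemma cross_bound: "\<bar>gradL \<theta> \<bullet> g\<bar> \<le> (G + (norm g)\<^sup>2) / 2"
proof -
  have "\<bar>gradL \<theta> \<bullet> g\<bar> \<le> norm (gradL \<theta>) * norm g" by (rule Cauchy_Schwarz_ineq2)
  also have "\<dots> \<le> ((norm (gradL \<theta>))\<^sup>2 + (norm g)\<^sup>2) / 2" by (rule amgm2)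
  also have "\<dots> \<le> (G + (norm g)\<^sup>2) / 2" using grad_bound[of \<theta>] by simp
  finally show ?thesis .
qed

definition "hZ t \<omega> = gradL (\<Theta> t \<omega>) \<bullet> gZ t \<omega>"

lemma E_cross:
  shows "integrable P (hZ t)"
    "(\<integral>\<omega>. hZ t \<omega> \<partial>P) \<ge> (\<integral>\<omega>. (norm (gradL (\<Theta> t \<omega>)))\<^sup>2 \<partial>P) - G * sqrt (2 * c t)"
proof -
  interpret P: prob_space P by (rule prob)
  note g = E_gsq[of t]
  show i: "integrable P (hZ t)"
  proof (rule Bochner_Integration.integrable_bound[where f="\<lambda>\<omega>. (G + (norm (gZ t \<omega>))\<^sup>2) / 2"])
    show "integrable P (\<lambda>\<omega>. (G + (norm (gZ t \<omega>))\<^sup>2) / 2)" using g(1) by simp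
    show "hZ t \<in> borel_measurable P" unfolding hZ_def by measurable
    show "AE x in P. norm (hZ t x) \<le> norm ((G + (norm (gZ t x))\<^sup>2) / 2)"
      using cross_bound A3_pos by (intro AE_I2) (simp add: hZ_def)
  qed
  have m: "(\<lambda>(\<theta>, z). gradL \<theta> \<bullet> gl z \<theta>) \<in> borel_measurable (borel \<Otimes>\<^sub>M Mz)"
    by (simp add: case_prod_beta') measurable
  have i': "integrable P (\<lambda>\<omega>. gradL (\<Theta> t \<omega>) \<bullet> gl (Z t \<omega>) (\<Theta> t \<omega>))"
  proof -
    have "hZ t = (\<lambda>\<omega>. gradL (\<Theta> t \<omega>) \<bullet> gl (Z t \<omega>) (\<Theta> t \<omega>))" by (rule ext) (simp add: hZ_def gZ_def)
    thus ?thesis using i by simp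
  qed
  note tr = transfer_int[OF m i']
  have "(\<integral>\<omega>. hZ t \<omega> \<partial>P) = (\<integral>\<omega>. (\<integral>z. gradL (\<Theta> t \<omega>) \<bullet> gl z (\<Theta> t \<omega>) \<partial>mu t) \<partial>P)"
    using tr(2) by (simp add: hZ_def gZ_def)
  also have "\<dots> \<ge> (\<integral>\<omega>. (norm (gradL (\<Theta> t \<omega>)))\<^sup>2 - G * sqrt (2 * c t) \<partial>P)"
    by (rule integral_mono[OF _ tr(1)]) (use E_grad[of t] bias in auto)
  finally show "(\<integral>\<omega>. hZ t \<omega> \<partial>P) \<ge> (\<integral>\<omega>. (norm (gradL (\<Theta> t \<omega>)))\<^sup>2 \<partial>P) - G * sqrt (2 * c t)"
    using E_grad[of t] by (simp add: P.prob_space)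
qed

lemma step_pw:
  assumes \<omega>: "\<omega> \<in> space P"
  shows "L (\<Theta> (Suc t) \<omega>) \<le> L (\<Theta> t \<omega>) - \<eta> t * hZ t \<omega> + Lc / 2 * (\<eta> t)\<^sup>2 * (norm (gZ t \<omega>))\<^sup>2"
proof -
  have "L (\<Theta> (Suc t) \<omega>) \<le> L (\<Theta> t \<omega>) + gradL (\<Theta> t \<omega>) \<bullet> (\<Theta> (Suc t) \<omega> - \<Theta> t \<omega>)
      + Lc / 2 * (norm (\<Theta> (Suc t) \<omega> - \<Theta> t \<omega>))\<^sup>2"
    by (rule descent_lemma[OF A1_diff A1_lip])
  also have "\<Theta> (Suc t) \<omega> - \<Theta> t \<omega> = - (\<eta> t *\<^sub>R gZ t \<omega>)"
    using Theta_step[OF \<omega>] by (simp add: gZ_def)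
  finally show ?thesis
    using eta_pos[of t] by (simp add: hZ_def power_mult_distrib)
qed

lemma Lc_nonneg: "Lc \<ge> 0" using A1_lip by (simp add: lipschitz_on_def)

lemma E_L: "integrable P (\<lambda>\<omega>. L (\<Theta> t \<omega>))"
proof (induction t)
  case 0 thus ?case by (rule init_int)
next
  case (Suc t)
  show ?case
  proof (rule Bochner_Integration.integrable_bound[where f="\<lambda>\<omega>. L (\<Theta> t \<omega>) + \<eta> t * \<bar>hZ t \<omega>\<bar> + Lc / 2 * (\<eta> t)\<^sup>2 * (norm (gZ t \<omega>))\<^sup>2"])
    show "integrable P (\<lambda>\<omega>. L (\<Theta> t \<omega>) + \<eta> t * \<bar>hZ t \<omega>\<bar> + Lc / 2 * (\<eta> t)\<^sup>2 * (norm (gZ t \<omega>))\<^sup>2)"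
      using Suc E_cross(1)[of t] E_gsq(1)[of t] by simp
    show "(\<lambda>\<omega>. L (\<Theta> (Suc t) \<omega>)) \<in> borel_measurable P" by measurable
    show "AE x in P. norm (L (\<Theta> (Suc t) x)) \<le> norm (L (\<Theta> t x) + \<eta> t * \<bar>hZ t x\<bar> + Lc / 2 * (\<eta> t)\<^sup>2 * (norm (gZ t x))\<^sup>2)"
    proof (rule AE_I2)
      fix \<omega> assume \<omega>: "\<omega> \<in> space P"
      have "- (\<eta> t * hZ t \<omega>) \<le> \<eta> t * \<bar>hZ t \<omega>\<bar>" using eta_pos[of t]
        by (metis abs_ge_minus_self abs_mult abs_of_pos mult_minus_right)
      hence "L (\<Theta> (Suc t) \<omega>) \<le> L (\<Theta> t \<omega>) + \<eta> t * \<bar>hZ t \<omega>\<bar> + Lc / 2 * (\<eta> t)\<^sup>2 * (norm (gZ t \<omega>))\<^sup>2"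
        using step_pw[OF \<omega>, of t] by linarith
      moreover have "0 \<le> L (\<Theta> (Suc t) \<omega>)" by (rule L_nonneg)
      ultimately show "norm (L (\<Theta> (Suc t) \<omega>)) \<le> norm (L (\<Theta> t \<omega>) + \<eta> t * \<bar>hZ t \<omega>\<bar> + Lc / 2 * (\<eta> t)\<^sup>2 * (norm (gZ t \<omega>))\<^sup>2)"
        by simp
    qed
  qed
qed

definition "EL t = (\<integral>\<omega>. L (\<Theta> t \<omega>) \<partial>P)"
definition "Eg t = (\<integral>\<omega>. (norm (gradL (\<Theta> t \<omega>)))\<^sup>2 \<partial>P)"
definition "b t = \<eta> t * (sqrt (2 * c t) + Lc * \<eta> t / 2)"

lemma step_E: "\<eta> t * Eg t \<le> EL t - EL (Suc t) + G * b t"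
proof -
  have "EL (Suc t) \<le> (\<integral>\<omega>. L (\<Theta> t \<omega>) - \<eta> t * hZ t \<omega> + Lc / 2 * (\<eta> t)\<^sup>2 * (norm (gZ t \<omega>))\<^sup>2 \<partial>P)"
    unfolding EL_def
    by (rule integral_mono[OF E_L]) (use E_L[of t] E_cross(1)[of t] E_gsq(1)[of t] step_pw in auto)
  also have "\<dots> = EL t - \<eta> t * (\<integral>\<omega>. hZ t \<omega> \<partial>P) + Lc / 2 * (\<eta> t)\<^sup>2 * (\<integral>\<omega>. (norm (gZ t \<omega>))\<^sup>2 \<partial>P)"
    unfolding EL_def using E_L[of t] E_cross(1)[of t] E_gsq(1)[of t] by simp
  also have "\<dots> \<le> EL t - \<eta> t * (Eg t - G * sqrt (2 * c t)) + Lc / 2 * (\<eta> t)\<^sup>2 * G"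
  proof -
    have "\<eta> t * (Eg t - G * sqrt (2 * c t)) \<le> \<eta> t * (\<integral>\<omega>. hZ t \<omega> \<partial>P)"
      using E_cross(2)[of t] eta_pos[of t] by (simp add: Eg_def)
    moreover have "Lc / 2 * (\<eta> t)\<^sup>2 * (\<integral>\<omega>. (norm (gZ t \<omega>))\<^sup>2 \<partial>P) \<le> Lc / 2 * (\<eta> t)\<^sup>2 * G"
      using E_gsq(2)[of t] Lc_nonneg by (intro mult_left_mono) auto
    ultimately show ?thesis by linarith
  qed
  finally show ?thesis by (simp add: b_def algebra_simps power2_eq_square)
qed

lemma EL_nonneg: "EL t \<ge> 0"
  unfolding EL_def by (intro Bochner_Integration.integral_nonneg L_nonneg)

lemma Eg_nonneg: "Eg t \<ge> 0"
  unfolding Eg_def by (intro Bochner_Integration.integral_nonneg) simp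

lemma b_nonneg: "b t \<ge> 0"
  unfolding b_def using eta_pos[of t] c_nonneg[of t] Lc_nonneg by simp

lemma telescope: "(\<Sum>t\<le>T. \<eta> t * Eg t) \<le> EL 0 - EL (Suc T) + G * (\<Sum>t\<le>T. b t)"
proof (induction T)
  case 0 thus ?case using step_E[of 0] by simp
next
  case (Suc T)
  thus ?case using step_E[of "Suc T"] by (simp add: distrib_left)
qed

lemma b_summable: "summable b"
proof (rule summable_comparison_test'[where g="\<lambda>t. ((\<eta> t)\<^sup>2 + 2 * c t) / 2 + Lc / 2 * (\<eta> t)\<^sup>2"])
  show "summable (\<lambda>t. ((\<eta> t)\<^sup>2 + 2 * c t) / 2 + Lc / 2 * (\<eta> t)\<^sup>2)"
    using A2_sq A4 by (intro summable_add summable_divide summable_mult) auto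
  fix n
  have "\<eta> n * sqrt (2 * c n) \<le> ((\<eta> n)\<^sup>2 + (sqrt (2 * c n))\<^sup>2) / 2" by (rule amgm2)
  also have "(sqrt (2 * c n))\<^sup>2 = 2 * c n" using c_nonneg[of n] by simp
  finally have "\<eta> n * sqrt (2 * c n) \<le> ((\<eta> n)\<^sup>2 + 2 * c n) / 2" .
  thus "norm (b n) \<le> ((\<eta> n)\<^sup>2 + 2 * c n) / 2 + Lc / 2 * (\<eta> n)\<^sup>2"
    using b_nonneg[of n] by (simp add: b_def algebra_simps power2_eq_square)
qed

lemma main:
  "(\<forall>t. integrable P (\<lambda>\<omega>. (norm (gradL (\<Theta> t \<omega>)))\<^sup>2))
       \<and> (\<forall>T. (\<Sum>t\<le>T. \<eta> t * (\<integral>\<omega>. (norm (gradL (\<Theta> t \<omega>)))\<^sup>2 \<partial>P))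
               \<le> (\<integral>\<omega>. L (\<Theta> 0 \<omega>) \<partial>P)
                 + G * (\<Sum>t\<le>T. \<eta> t * (sqrt (2 * c t) + Lc * \<eta> t / 2)))
       \<and> summable (\<lambda>t. \<eta> t * (\<integral>\<omega>. (norm (gradL (\<Theta> t \<omega>)))\<^sup>2 \<partial>P))
       \<and> summable (\<lambda>t. \<eta> t * (sqrt (2 * c t) + Lc * \<eta> t / 2))"
proof -
  have bound: "(\<Sum>t\<le>T. \<eta> t * Eg t) \<le> EL 0 + G * (\<Sum>t\<le>T. b t)" for T
    using telescope[of T] EL_nonneg[of "Suc T"] by linarith
  have sb: "summable (\<lambda>t. \<eta> t * Eg t)"
  proof (rule summableI_nonneg_bounded[where x="EL 0 + G * suminf b"])
    show "0 \<le> \<eta> n * Eg n" for n using eta_pos[of n] Eg_nonneg[of n] by simp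
    fix n
    show "(\<Sum>t<n. \<eta> t * Eg t) \<le> EL 0 + G * suminf b"
    proof (cases n)
      case 0 thus ?thesis using EL_nonneg[of 0] A3_pos suminf_nonneg[OF b_summable b_nonneg] by simp
    next
      case (Suc m)
      have "(\<Sum>t<n. \<eta> t * Eg t) = (\<Sum>t\<le>m. \<eta> t * Eg t)" using Suc lessThan_Suc_atMost by simp
      also have "\<dots> \<le> EL 0 + G * (\<Sum>t\<le>m. b t)" by (rule bound)
      also have "(\<Sum>t\<le>m. b t) \<le> suminf b" by (rule sum_le_suminf[OF b_summable]) (auto simp: b_nonneg)
      hence "EL 0 + G * (\<Sum>t\<le>m. b t) \<le> EL 0 + G * suminf b" using A3_pos by simp
      finally show ?thesis .
    qed
  qed
  show ?thesis
    using E_grad bound sb b_summable unfolding Eg_def EL_def b_def by auto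
qed

end

theorem proposition1:
  fixes Mz :: "'z measure"                 \<comment> \<open>base measure dz on the sample space Z\<close>
    and P :: "'w measure"                  \<comment> \<open>underlying probability space\<close>
    and loss :: "'z \<Rightarrow> 'p::euclidean_space \<Rightarrow> real"
    and gl :: "'z \<Rightarrow> 'p \<Rightarrow> 'p"        \<comment> \<open>gradient of the loss in the parameter\<close>
    and p :: "nat \<Rightarrow> 'z \<Rightarrow> real" and pstar :: "'z \<Rightarrow> real"
    and c :: "nat \<Rightarrow> real"
    and L :: "'p \<Rightarrow> real" and gradL :: "'p \<Rightarrow> 'p" and Lc :: real
    and \<eta> :: "nat \<Rightarrow> real" and G :: real
    and Z :: "nat \<Rightarrow> 'w \<Rightarrow> 'z" and \<Theta> :: "nat \<Rightarrow> 'w \<Rightarrow> 'p"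
  assumes prob: "prob_space P"
    and loss_nonneg: "\<And>z \<theta>. z \<in> space Mz \<Longrightarrow> loss z \<theta> \<ge> 0"
    and loss_meas: "(\<lambda>(z, \<theta>). loss z \<theta>) \<in> borel_measurable (Mz \<Otimes>\<^sub>M borel)"
    and gl_meas: "(\<lambda>(z, \<theta>). gl z \<theta>) \<in> borel_measurable (Mz \<Otimes>\<^sub>M borel)"
    and loss_diff: "\<And>z \<theta>. z \<in> space Mz \<Longrightarrow>
                      (loss z has_derivative (\<lambda>h. gl z \<theta> \<bullet> h)) (at \<theta>)"
    and p_meas: "\<And>t. p t \<in> borel_measurable Mz"
    and p_nonneg: "\<And>t z. z \<in> space Mz \<Longrightarrow> p t z \<ge> 0"
    and p_int: "\<And>t. integrable Mz (p t)"
    and p_one: "\<And>t. (\<integral>z. p t z \<partial>Mz) = 1"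
    and pstar_meas: "pstar \<in> borel_measurable Mz"
    and pstar_nonneg: "\<And>z. z \<in> space Mz \<Longrightarrow> pstar z \<ge> 0"
    and pstar_int: "integrable Mz pstar"
    and pstar_one: "(\<integral>z. pstar z \<partial>Mz) = 1"
    and c_def: "\<And>t. c t = (\<integral>z. \<bar>p t z - pstar z\<bar> \<partial>Mz)"
    and L_integrable: "\<And>\<theta>. integrable Mz (\<lambda>z. pstar z * loss z \<theta>)"
    and L_def: "\<And>\<theta>. L \<theta> = (\<integral>z. pstar z * loss z \<theta> \<partial>Mz)"
    and Z_meas: "\<And>t. Z t \<in> measurable P Mz"
    and Theta0_meas: "\<Theta> 0 \<in> borel_measurable P"
    and Z_cond: "\<And>t C A. C \<in> sets (borel \<Otimes>\<^sub>M (\<Pi>\<^sub>M i\<in>{..<t}. Mz)) \<Longrightarrow> A \<in> sets Mz \<Longrightarrow>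
                   measure P {\<omega> \<in> space P. (\<Theta> 0 \<omega>, \<lambda>i\<in>{..<t}. Z i \<omega>) \<in> C \<and> Z t \<omega> \<in> A}
                 = measure P {\<omega> \<in> space P. (\<Theta> 0 \<omega>, \<lambda>i\<in>{..<t}. Z i \<omega>) \<in> C}
                   * measure (density Mz (p t)) A"
    and Theta_step: "\<And>t \<omega>. \<omega> \<in> space P \<Longrightarrow>
                      \<Theta> (Suc t) \<omega> = \<Theta> t \<omega> - \<eta> t *\<^sub>R gl (Z t \<omega>) (\<Theta> t \<omega>)"
    and eta_pos: "\<And>t. \<eta> t > 0"
    and A1_diff: "\<And>\<theta>. (L has_derivative (\<lambda>h. gradL \<theta> \<bullet> h)) (at \<theta>)"
    and A1_lip: "Lc-lipschitz_on UNIV gradL"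
    and A2_div: "\<not> summable \<eta>"
    and A2_sq: "summable (\<lambda>t. (\<eta> t)\<^sup>2)"
    and A3_pos: "G > 0"
    and A3: "\<And>t \<theta>. (\<integral>\<^sup>+ z. ennreal (p t z * (norm (gl z \<theta>))\<^sup>2) \<partial>Mz) \<le> ennreal G"
    and A4: "summable c"
    and init_int: "integrable P (\<lambda>\<omega>. L (\<Theta> 0 \<omega>))"
  shows "(\<forall>t. integrable P (\<lambda>\<omega>. (norm (gradL (\<Theta> t \<omega>)))\<^sup>2))
       \<and> (\<forall>T. (\<Sum>t\<le>T. \<eta> t * (\<integral>\<omega>. (norm (gradL (\<Theta> t \<omega>)))\<^sup>2 \<partial>P))
               \<le> (\<integral>\<omega>. L (\<Theta> 0 \<omega>) \<partial>P)
                 + G * (\<Sum>t\<le>T. \<eta> t * (sqrt (2 * c t) + Lc * \<eta> t / 2)))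
       \<and> summable (\<lambda>t. \<eta> t * (\<integral>\<omega>. (norm (gradL (\<Theta> t \<omega>)))\<^sup>2 \<partial>P))
       \<and> summable (\<lambda>t. \<eta> t * (sqrt (2 * c t) + Lc * \<eta> t / 2))"
proof -
  interpret sgd Mz P loss gl p pstar c L gradL Lc \<eta> G Z \<Theta>
    by (rule sgd.intro) (fact assms)+
  show ?thesis by (rule main)
qed

end
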